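(* Let $m,n,d,e,k$ be positive integers with $m=2n$, $e=\gcd(n,d)=\gcd(m,d)$ and $1\le k\le\frac{n}{e}$, with $C$, ${\rm DC}$ and $B_{\vec a}$ as in the context. For even $r$ with $0\le r\le m/e$ and $\varepsilon\in\{1,-1\}$, let $\alpha_{r,\varepsilon}=\#\{0\ne c\in C\mid {\rm DC}(c)=-1+\varepsilon2^{m-\frac{er}{2}}\}$ and \[\beta_r=2^{-m}\#\{\vec a\in\mathbb{F}_{2^n}\times\mathbb{F}_{2^m}^k\mid {\rm rk}(B_{\vec a})=r,\ (a_0,a_1,\dots,a_{k-1})\ne0\}.\] Then for each even $r$ with $0\le r\le m/e$ and each $\varepsilon=\pm1$, \[\alpha_{r,\varepsilon}=\frac12\big(2^{er}+\varepsilon2^{\frac{er}{2}}\big)\beta_r.\]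
   Context: For $\vec a=(a_0,\dots,a_k)\in\mathbb{F}_{2^n}\times\mathbb{F}_{2^m}^k$ define $Q_{\vec a}:\mathbb{F}_{2^m}\to\mathbb{F}_{2^e}$ by \[Q_{\vec a}(x)={\rm Tr}_{\mathbb{F}_{2^n}/\mathbb{F}_{2^e}}\big(a_0x^{2^{nd/e}+1}\big)+\sum_{j=1}^{k-1}{\rm Tr}_{\mathbb{F}_{2^m}/\mathbb{F}_{2^e}}\big(a_jx^{2^{(\frac{n}{e}-j)d}+1}\big)+{\rm Tr}_{\mathbb{F}_{2^m}/\mathbb{F}_{2^e}}(a_kx).\] Here $x^{2^{nd/e}+1}\in\mathbb{F}_{2^n}$. Let $B_{\vec a}(x,y)=Q_{\vec a}(x+y)-Q_{\vec a}(x)-Q_{\vec a}(y)$, an $\mathbb{F}_{2^e}$-bilinear form on the $\mathbb{F}_{2^e}$-space $\mathbb{F}_{2^m}$. Its rank ${\rm rk}(B_{\vec a})$ is $m/e$ minus the $\mathbb{F}_{2^e}$-dimension of its radical. Let $\pi$ be a primitive element of $\mathbb{F}_{2^m}$, let $c_{\vec a}=(c_{\vec a,0},\dots,c_{\vec a,2^m-2})$ with $c_{\vec a,i}={\rm Tr}_{\mathbb{F}_{2^e}/\mathbb{F}_2}(Q_{\vec a}(\pi^{-i}))$, and let $C=\{c_{\vec a}\}$. For $c=(c_0,\dots,c_{2^m-2})\in C$, ${\rm DC}(c)=\sum_{i=0}^{2^m-2}(-1)^{c_i}$. *)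

theory Defs
  imports Complex_Main
begin

text \<open>We work inside a single finite field 'f of cardinality 2^m (playing the role of
 F_{2^m}).  For s dividing m, the subfield F_{2^s} is the set of fixed points of x \<mapsto> x^(2^s).\<close>

definition subfield2 :: "nat \<Rightarrow> 'f::{field,finite} set" where
  "subfield2 s = {x. x ^ (2 ^ s) = x}"

definition trace2 :: "nat \<Rightarrow> nat \<Rightarrow> 'f::{field,finite} \<Rightarrow> 'f" where
  "trace2 a b x = (\<Sum>i<a div b. x ^ (2 ^ (b * i)))"

definition avecs :: "nat \<Rightarrow> nat \<Rightarrow> (nat \<Rightarrow> 'f::{field,finite}) set" where
  "avecs n k = {a. a 0 \<in> subfield2 n \<and> (\<forall>j>k. a j = 0)}"

definition Qform :: "nat \<Rightarrow> nat \<Rightarrow> nat \<Rightarrow> nat \<Rightarrow> nat \<Rightarrow> (nat \<Rightarrow> 'f::{field,finite}) \<Rightarrow> 'f \<Rightarrow> 'f" where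
  "Qform m n d e k a x =
     trace2 n e (a 0 * x ^ (2 ^ (n * d div e) + 1))
     + (\<Sum>j\<in>{1..<k}. trace2 m e (a j * x ^ (2 ^ ((n div e - j) * d) + 1)))
     + trace2 m e (a k * x)"

definition Bform :: "nat \<Rightarrow> nat \<Rightarrow> nat \<Rightarrow> nat \<Rightarrow> nat \<Rightarrow> (nat \<Rightarrow> 'f::{field,finite}) \<Rightarrow> 'f \<Rightarrow> 'f \<Rightarrow> 'f" where
  "Bform m n d e k a x y = Qform m n d e k a (x + y) - Qform m n d e k a x - Qform m n d e k a y"

definition sub_span :: "'f::field set \<Rightarrow> 'f list \<Rightarrow> 'f set" where
  "sub_span K vs = {(\<Sum>i<length vs. c i * vs ! i) | c. \<forall>i. c i \<in> K}"

definition sub_dim :: "'f::field set \<Rightarrow> 'f set \<Rightarrow> nat" where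
  "sub_dim K V = (LEAST l. \<exists>vs. length vs = l \<and> set vs \<subseteq> V \<and> V \<subseteq> sub_span K vs)"

definition radical :: "('f \<Rightarrow> 'f \<Rightarrow> 'f::field) \<Rightarrow> 'f set" where
  "radical B = {x. \<forall>y. B x y = 0}"

definition rankB :: "nat \<Rightarrow> nat \<Rightarrow> nat \<Rightarrow> nat \<Rightarrow> nat \<Rightarrow> (nat \<Rightarrow> 'f::{field,finite}) \<Rightarrow> nat" where
  "rankB m n d e k a = m div e - sub_dim (subfield2 e) (radical (Bform m n d e k a))"

definition primitive_elem :: "'f::{field,finite} \<Rightarrow> bool" where
  "primitive_elem p \<longleftrightarrow> p \<noteq> 0 \<and> (\<forall>x. x \<noteq> 0 \<longrightarrow> (\<exists>i::nat. x = p ^ i))"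

definition codeword :: "nat \<Rightarrow> nat \<Rightarrow> nat \<Rightarrow> nat \<Rightarrow> nat \<Rightarrow> 'f::{field,finite} \<Rightarrow> (nat \<Rightarrow> 'f) \<Rightarrow> (nat \<Rightarrow> 'f)" where
  "codeword m n d e k p a =
     (\<lambda>i. if i < 2 ^ m - 1 then trace2 e 1 (Qform m n d e k a (inverse p ^ i)) else 0)"

definition code :: "nat \<Rightarrow> nat \<Rightarrow> nat \<Rightarrow> nat \<Rightarrow> nat \<Rightarrow> 'f::{field,finite} \<Rightarrow> (nat \<Rightarrow> 'f) set" where
  "code m n d e k p = codeword m n d e k p ` avecs n k"

definition DC :: "nat \<Rightarrow> (nat \<Rightarrow> 'f::field) \<Rightarrow> int" where
  "DC m c = (\<Sum>i<2 ^ m - 1. if c i = 0 then 1 else -1)"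

end

theory Submission
  imports Defs "HOL-Computational_Algebra.Polynomial" "HOL-Library.FuncSet"
begin



lemma frob_card:
  fixes x :: "'f::{field,finite}"
  shows "x ^ card (UNIV :: 'f set) = x"
proof (cases "x = 0")
  case False
  have "x * (\<Prod>y\<in>UNIV-{0}. x * y) = x * x ^ (card (UNIV :: 'f set) - 1) * \<Prod>(UNIV-{0})"
    by (simp add: prod.distrib mult_ac)
  also have "x * x ^ (card (UNIV :: 'f set) - 1) = x ^ Suc (card (UNIV :: 'f set) - 1)"
    by (subst power_Suc) auto
  also have "Suc (card (UNIV :: 'f set) - 1) = card (UNIV :: 'f set)"
    using finite_UNIV_card_ge_0[where ?'a = 'f] by simp
  also have "(\<Prod>y\<in>UNIV-{0}. x * y) = (\<Prod>y\<in>UNIV-{0}. y)"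
    by (rule prod.reindex_bij_witness[of _ "\<lambda>y. y / x" "\<lambda>y. x * y"]) (use False in auto)
  finally show ?thesis
    by simp
qed (use finite_UNIV_card_ge_0[where ?'a = 'f] in auto)

lemma char2_of_card:
  assumes "card (UNIV :: 'f::{field,finite} set) = 2 ^ m" "m > 0"
  shows "(2::'f) = 0"
proof -
  have "(-1::'f) ^ (2^m) = -1" using frob_card[of "-1::'f"] assms by simp
  moreover have "even ((2::nat)^m)" using assms by simp
  then have "(-1::'f) ^ (2^m) = 1" by simp
  ultimately have "(1::'f) = -1" by simp
  then have "(1::'f) + 1 = 0" by (metis add.right_inverse)
  then show ?thesis by simp
qed

lemma frob_of_card:
  assumes "card (UNIV :: 'f::{field,finite} set) = 2 ^ m"
  shows "(x::'f) ^ (2 ^ m) = x"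
  using frob_card[of x] assms by simp

section \<open>Characteristic two\<close>

lemma c2_neg: assumes "(2::'f::field) = 0" shows "- (x::'f) = x"
proof -
  have "x + x = 2 * x" by simp
  then have "x + x = 0" using assms by simp
  then show ?thesis by (metis add_eq_0_iff)
qed

lemma c2_minus: assumes "(2::'f::field) = 0" shows "(x::'f) - y = x + y"
  using c2_neg[OF assms, of y] by (metis diff_conv_add_uminus)

lemma c2_sq_add: assumes "(2::'f::field) = 0" shows "((x::'f) + y) ^ 2 = x ^ 2 + y ^ 2"
proof -
  have "(x + y) ^ 2 = x ^ 2 + 2 * x * y + y ^ 2" by (simp add: power2_sum)
  then show ?thesis using assms by simp
qed

lemma pow_pow2: "((x::'a::comm_monoid_mult) ^ (2 ^ a)) ^ (2 ^ b) = x ^ (2 ^ (a + b))"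
  by (simp add: power_mult[symmetric] power_add)

lemma c2_frob_add: assumes "(2::'f::field) = 0"
  shows "((x::'f) + y) ^ (2 ^ s) = x ^ (2 ^ s) + y ^ (2 ^ s)"
proof (induction s)
  case 0 then show ?case by simp
next
  case (Suc s)
  have "(x + y) ^ (2 ^ Suc s) = ((x + y) ^ (2 ^ s)) ^ 2"
    by (simp add: power_mult[symmetric] mult.commute)
  also have "\<dots> = (x ^ (2 ^ s)) ^ 2 + (y ^ (2 ^ s)) ^ 2"
    using Suc c2_sq_add[OF assms] by simp
  also have "\<dots> = x ^ (2 ^ Suc s) + y ^ (2 ^ Suc s)"
    by (simp add: power_mult[symmetric] mult.commute)
  finally show ?case .
qed

lemma c2_frob_sum: assumes "(2::'f::field) = 0"
  shows "(\<Sum>i\<in>A. (g i :: 'f)) ^ (2 ^ s) = (\<Sum>i\<in>A. g i ^ (2 ^ s))"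
proof (cases "finite A")
  case True then show ?thesis
    by (induction A rule: finite_induct) (simp_all add: c2_frob_add[OF assms])
qed simp

lemma fixed_iter:
  assumes "(y::'a::comm_monoid_mult) ^ (2 ^ c) = y"
  shows "y ^ (2 ^ (c * t)) = y"
proof (induction t)
  case 0 then show ?case by simp
next
  case (Suc t)
  have "y ^ (2 ^ (c * Suc t)) = (y ^ (2 ^ (c * t))) ^ (2 ^ c)"
    by (simp add: pow_pow2 add.commute)
  then show ?case using Suc assms by simp
qed

lemma fixed_dvd:
  assumes "(y::'a::comm_monoid_mult) ^ (2 ^ c) = y" "c dvd s"
  shows "y ^ (2 ^ s) = y"
  using fixed_iter[OF assms(1)] assms(2) by (metis dvd_def)

lemma fixed_mod:
  assumes "\<And>x::'a::comm_monoid_mult. x ^ (2 ^ m) = x"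
  shows "(y::'a) ^ (2 ^ s) = y ^ (2 ^ (s mod m))"
proof -
  have "y ^ (2 ^ s) = (y ^ (2 ^ (m * (s div m)))) ^ (2 ^ (s mod m))"
    by (simp add: pow_pow2)
  then show ?thesis using fixed_iter[of y m] assms by simp
qed

section \<open>Traces\<close>

lemma trace2_zero [simp]: "trace2 a b (0::'f::{field,finite}) = 0"
  unfolding trace2_def by (simp add: power_0_left)

lemma trace2_add: assumes "(2::'f::{field,finite}) = 0"
  shows "trace2 a b ((u::'f) + v) = trace2 a b u + trace2 a b v"
  by (simp add: trace2_def c2_frob_add[OF assms] sum.distrib)

lemma trace2_sum: assumes "(2::'f::{field,finite}) = 0"
  shows "trace2 a b (\<Sum>i\<in>A. (g i :: 'f)) = (\<Sum>i\<in>A. trace2 a b (g i))"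
proof (cases "finite A")
  case True then show ?thesis
    by (induction A rule: finite_induct) (simp_all add: trace2_add[OF assms])
qed simp

lemma trace2_scal:
  assumes "(l::'f::{field,finite}) ^ (2 ^ b) = l"
  shows "trace2 a b (l * w) = l * trace2 a b w"
  unfolding trace2_def
  by (simp add: power_mult_distrib fixed_iter[OF assms] sum_distrib_left)

lemma trace2_pow: assumes "(2::'f::{field,finite}) = 0"
  shows "trace2 a b (w::'f) ^ (2 ^ c) = trace2 a b (w ^ (2 ^ c))"
  unfolding trace2_def c2_frob_sum[OF assms]
  by (simp add: pow_pow2 add.commute)

lemma trace2_shift:
  assumes "b > 0" "b dvd a" "(w::'f::{field,finite}) ^ (2 ^ a) = w"
  shows "trace2 a b (w ^ (2 ^ b)) = trace2 a b w"
proof (cases "a div b")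
  case 0 then show ?thesis by (simp add: trace2_def)
next
  case (Suc M)
  define g where "g j = w ^ (2 ^ (b * j))" for j
  have ga: "g (Suc M) = g 0"
  proof -
    have "b * Suc M = a" using Suc assms by (metis dvd_mult_div_cancel)
    then show ?thesis using assms(3) by (simp add: g_def)
  qed
  have "trace2 a b (w ^ (2 ^ b)) = (\<Sum>i<Suc M. g (Suc i))"
    unfolding trace2_def g_def Suc by (simp add: pow_pow2)
  also have "\<dots> = (\<Sum>i<M. g (Suc i)) + g (Suc M)" by simp
  also have "\<dots> = g 0 + (\<Sum>i<M. g (Suc i))" using ga by simp
  also have "\<dots> = (\<Sum>i<Suc M. g i)" by (simp only: sum.lessThan_Suc_shift)
  also have "\<dots> = trace2 a b w" unfolding trace2_def g_def Suc by simp
  finally show ?thesis .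
qed

lemma trace2_shift_iter:
  assumes "b > 0" "b dvd a" "(w::'f::{field,finite}) ^ (2 ^ a) = w"
  shows "trace2 a b (w ^ (2 ^ (b * t))) = trace2 a b w"
proof (induction t)
  case 0 then show ?case by simp
next
  case (Suc t)
  have fx: "(w ^ (2 ^ (b * t))) ^ (2 ^ a) = w ^ (2 ^ (b * t))"
    by (metis assms(3) pow_pow2 add.commute)
  have "w ^ (2 ^ (b * Suc t)) = (w ^ (2 ^ (b * t))) ^ (2 ^ b)"
    by (simp add: pow_pow2 add.commute)
  then show ?case using trace2_shift[OF assms(1,2) fx] Suc by simp
qed

lemma trace2_shift_dvd:
  assumes "b > 0" "b dvd a" "(w::'f::{field,finite}) ^ (2 ^ a) = w" "b dvd s"
  shows "trace2 a b (w ^ (2 ^ s)) = trace2 a b w"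
  using trace2_shift_iter[OF assms(1-3)] assms(4) by (metis dvd_def)

lemma trace2_fixed:
  assumes "(2::'f::{field,finite}) = 0" "b > 0" "b dvd a" "(w::'f) ^ (2 ^ a) = w"
  shows "trace2 a b w ^ (2 ^ b) = trace2 a b w"
  using trace2_pow[OF assms(1)] trace2_shift[OF assms(2-4)] by simp

lemma trace2_01:
  assumes "(2::'f::{field,finite}) = 0" "(w::'f) ^ (2 ^ a) = w"
  shows "trace2 a 1 w = 0 \<or> trace2 a 1 w = 1"
proof -
  have "trace2 a 1 w ^ 2 = trace2 a 1 w" using trace2_fixed[OF assms(1), of 1 a w] assms(2) by simp
  then have "trace2 a 1 w * (trace2 a 1 w - 1) = 0" by (simp add: power2_eq_square algebra_simps)
  then show ?thesis by simp
qed

lemma trace2_comp: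
  assumes "(2::'f::{field,finite}) = 0" "e > 0" "e dvd a"
  shows "trace2 e 1 (trace2 a e (w::'f)) = trace2 a 1 w"
proof -
  define A where "A = a div e"
  have aA: "a = e * A" using assms unfolding A_def by simp
  have "trace2 e 1 (trace2 a e w) = (\<Sum>i<e. \<Sum>j<A. w ^ (2 ^ (e * j + i)))"
    unfolding trace2_def A_def c2_frob_sum[OF assms(1)] by (simp add: pow_pow2)
  also have "\<dots> = (\<Sum>(i,j)\<in>{..<e} \<times> {..<A}. w ^ (2 ^ (e * j + i)))"
    by (rule sum.cartesian_product)
  also have "\<dots> = (\<Sum>l<a. w ^ (2 ^ l))"
  proof (rule sum.reindex_bij_witness[of _ "\<lambda>l. (l mod e, l div e)" "\<lambda>(i,j). e * j + i"])
    fix l assume "l \<in> {..<a}"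
    then show "(l mod e, l div e) \<in> {..<e} \<times> {..<A}"
      using assms aA by (auto simp: less_mult_imp_div_less mult.commute)
  next
    fix ij assume "ij \<in> {..<e} \<times> {..<A}"
    then obtain i j where ij: "ij = (i, j)" "i < e" "j < A" by auto
    have "e * j + i < e * (j + 1)" using ij by simp
    also have "\<dots> \<le> e * A" using ij by (intro mult_le_mono2) simp
    finally show "(case ij of (i, j) \<Rightarrow> e * j + i) \<in> {..<a}" using ij aA by simp
  qed (use assms in auto)
  also have "\<dots> = trace2 a 1 w" unfolding trace2_def by simp
  finally show ?thesis .
qed




lemma sum_split_nat: "(\<Sum>i<(a::nat)+b. (g i :: 'a::comm_monoid_add)) = (\<Sum>i<a. g i) + (\<Sum>i<b. g (a + i))"
  by (induction b) (simp_all add: add.assoc)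

lemma trace2_half:
  assumes "(2::'f::{field,finite}) = 0" "e > 0" "e dvd n"
  shows "trace2 (2 * n) e (w::'f) = trace2 n e (w + w ^ (2 ^ n))"
proof -
  define N where "N = n div e"
  have nN: "n = e * N" using assms unfolding N_def by simp
  have "2 * n div e = N + N" using assms unfolding N_def by (metis div_mult_swap mult_2)
  then have "trace2 (2 * n) e w = (\<Sum>i<N. w ^ (2 ^ (e * i))) + (\<Sum>i<N. w ^ (2 ^ (e * (N + i))))"
    unfolding trace2_def by (simp add: sum_split_nat)
  also have "(\<Sum>i<N. w ^ (2 ^ (e * (N + i)))) = (\<Sum>i<N. (w ^ (2 ^ n)) ^ (2 ^ (e * i)))"
    by (simp add: pow_pow2 nN distrib_left)
  finally show ?thesis
    unfolding trace2_add[OF assms(1)] by (simp add: trace2_def N_def)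
qed

lemma lin_poly_zero:
  fixes c :: "'i \<Rightarrow> 'f::{field,finite}" and g :: "'i \<Rightarrow> nat"
  assumes card: "card (UNIV :: 'f set) = 2 ^ m" and fin: "finite I" and inj: "inj_on g I"
    and lt: "\<And>i. i \<in> I \<Longrightarrow> g i < m"
    and z: "\<And>x. (\<Sum>i\<in>I. c i * x ^ (2 ^ (g i))) = 0" and i0: "i0 \<in> I"
  shows "c i0 = 0"
proof -
  define P where "P = (\<Sum>i\<in>I. monom (c i) (2 ^ (g i)))"
  have polyP: "poly P x = (\<Sum>i\<in>I. c i * x ^ (2 ^ (g i)))" for x
    unfolding P_def by (simp add: poly_sum poly_monom)
  have coeffP: "coeff P j = (\<Sum>i\<in>I. if 2 ^ (g i) = j then c i else 0)" for j
    unfolding P_def by (simp add: coeff_sum coeff_monom)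
  have P0: "P = 0"
  proof (rule ccontr)
    assume "P \<noteq> 0"
    have "degree P \<le> 2 ^ m - 1"
    proof (rule degree_le, intro allI impI)
      fix j :: nat assume "2 ^ m - 1 < j"
      then have "2 ^ m \<le> j" by simp
      moreover have "2 ^ (g i) < (2::nat) ^ m" if "i \<in> I" for i using lt[OF that] by simp
      ultimately show "coeff P j = 0" unfolding coeffP
        by (intro sum.neutral) (auto, fastforce)
    qed
    moreover have "card {x. poly P x = 0} \<le> degree P"
      using card_poly_roots_bound[OF \<open>P \<noteq> 0\<close>] .
    moreover have "{x. poly P x = 0} = UNIV" using polyP z by auto
    ultimately have "card (UNIV::'f set) \<le> 2 ^ m - 1" by simp
    moreover have "(0::nat) < 2 ^ m" by simp
    ultimately show False using card by linarith
  qed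
  have "coeff P (2 ^ (g i0)) = (\<Sum>i\<in>I. if i = i0 then c i else 0)"
    unfolding coeffP
  proof (rule sum.cong)
    fix i assume "i \<in> I"
    then have "2 ^ (g i) = (2::nat) ^ (g i0) \<longleftrightarrow> i = i0"
      using inj i0 by (auto dest: inj_onD)
    then show "(if (2::nat) ^ g i = 2 ^ g i0 then c i else 0) = (if i = i0 then c i else 0)" by simp
  qed simp
  also have "\<dots> = c i0" using fin i0 by simp
  finally show ?thesis using P0 by simp
qed

lemma trace2_nonzero:
  assumes card: "card (UNIV :: 'f::{field,finite} set) = 2 ^ m" and "b > 0" "b dvd m" "m > 0"
  shows "\<exists>w::'f. trace2 m b w \<noteq> 0"
proof (rule ccontr)
  assume "\<not> ?thesis"
  then have z: "(\<Sum>i\<in>{..<m div b}. (1::'f) * x ^ (2 ^ (b * i))) = 0" for x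
    by (simp add: trace2_def)
  have mpos: "0 < m div b" using assms by (metis dvd_div_eq_0_iff not_gr0)
  have "(1::'f) = 0"
  proof (rule lin_poly_zero[OF card _ _ _ z, of 0])
    show "inj_on ((*) b) {..<m div b}" using assms by (simp add: inj_on_def)
    fix i assume "i \<in> {..<m div b}"
    then have "b * i < b * (m div b)" using assms by (intro mult_strict_left_mono) auto
    moreover have "b * (m div b) = m" using assms by simp
    ultimately show "b * i < m" by simp
  qed (use mpos in auto)
  then show False by simp
qed

lemma trace2_nondeg:
  assumes card: "card (UNIV :: 'f::{field,finite} set) = 2 ^ m" and "b > 0" "b dvd m" "m > 0"
    and "(z::'f) \<noteq> 0"
  shows "\<exists>y. trace2 m b (y * z) \<noteq> 0"
proof -
  obtain w::'f where "trace2 m b w \<noteq> 0" using trace2_nonzero[OF assms(1-4)] by blast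
  then show ?thesis using assms(5) by (intro exI[of _ "w / z"]) simp
qed

lemma fibre_card:
  fixes T :: "'f::{field,finite} \<Rightarrow> 'f"
  assumes "(2::'f::{field,finite}) = 0" and add: "\<And>x y. T (x + y) = T x + (T y :: 'f)"
  shows "card (UNIV :: 'f set) = card (range T) * card {x. T x = 0}"
proof -
  have U: "UNIV = (\<Union>v\<in>range T. {x. T x = v})" by auto
  have "card (UNIV :: 'f set) = (\<Sum>v\<in>range T. card {x. T x = v})"
    by (subst U, rule card_UN_disjoint) auto
  also have "\<dots> = (\<Sum>v\<in>range T. card {x. T x = 0})"
  proof (rule sum.cong)
    fix v assume "v \<in> range T"
    then obtain x0 where x0: "v = T x0" by auto
    have "bij_betw (\<lambda>x. x + x0) {x. T x = 0} {x. T x = v}"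
    proof (rule bij_betw_byWitness[of _ "\<lambda>y. y + x0"])
      show "\<forall>a\<in>{x. T x = 0}. a + x0 + x0 = a" "\<forall>a\<in>{x. T x = v}. a + x0 + x0 = a"
        using c2_minus[OF assms(1)] by (metis add_diff_cancel)+
      show "(\<lambda>x. x + x0) ` {x. T x = 0} \<subseteq> {x. T x = v}" using add x0 by auto
      show "(\<lambda>x. x + x0) ` {x. T x = v} \<subseteq> {x. T x = 0}"
      proof
        fix y assume "y \<in> (\<lambda>x. x + x0) ` {x. T x = v}"
        then obtain x where "T x = v" "y = x + x0" by auto
        then have "T y = v + v" using add x0 by simp
        also have "\<dots> = 0" using c2_minus[OF assms(1), of v v] by simp
        finally show "y \<in> {x. T x = 0}" by simp
      qed
    qed
    then show "card {x. T x = v} = card {x. T x = 0}" by (simp add: bij_betw_same_card)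
  qed simp
  finally show ?thesis by simp
qed

lemma subfield2_card:
  assumes card: "card (UNIV :: 'f::{field,finite} set) = 2 ^ m" and "m > 0" "e > 0" "e dvd m"
  shows "card (subfield2 e :: 'f set) = 2 ^ e"
proof (rule antisym)
  have c2: "(2::'f) = 0" using char2_of_card[OF card] assms by simp
  define Q :: "'f poly" where "Q = monom 1 (2 ^ e) - monom 1 1"
  have lt: "(1::nat) < 2 ^ e" using assms(3) one_less_power[of "2::nat" e] by simp
  have h1: "(1::nat) \<noteq> 2 ^ e" "2 ^ e \<noteq> (1::nat)" using lt by linarith+
  have c1: "coeff (monom (1::'f) 1) (2 ^ e) = 0" by (metis coeff_monom h1(1))
  have cQ: "coeff Q (2 ^ e) = 1" unfolding Q_def coeff_diff c1 by simp
  then have "Q \<noteq> 0" by auto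
  have "degree Q \<le> 2 ^ e"
    by (rule degree_le) (auto simp: Q_def coeff_monom)
  moreover have "subfield2 e = {x::'f. poly Q x = 0}"
    by (simp add: subfield2_def Q_def poly_monom)
  ultimately show "card (subfield2 e :: 'f set) \<le> 2 ^ e"
    using card_poly_roots_bound[OF \<open>Q \<noteq> 0\<close>] by simp
next
  have c2: "(2::'f) = 0" using char2_of_card[OF card] assms by simp
  have FR: "\<And>x::'f. x ^ (2 ^ m) = x" using frob_of_card[OF card] .
  define M where "M = m div e"
  have mM: "m = e * M" using assms unfolding M_def by simp
  have Mpos: "M > 0" using assms mM by (metis gr0I mult_0_right)
  define T where "T = (trace2 m e :: 'f \<Rightarrow> 'f)"
  have rT: "range T \<subseteq> subfield2 e"
    unfolding T_def subfield2_def using trace2_fixed[OF c2 assms(3,4) FR] by auto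
  define P :: "'f poly" where "P = (\<Sum>i<M. monom 1 (2 ^ (e * i)))"
  have polyP: "poly P x = T x" for x
    unfolding P_def T_def trace2_def M_def by (simp add: poly_sum poly_monom)
  have coeffP: "coeff P j = (\<Sum>i<M. if 2 ^ (e * i) = j then 1 else 0)" for j
    unfolding P_def by (simp add: coeff_sum coeff_monom)
  have "coeff P 1 = (\<Sum>i<M. if i = 0 then 1 else 0)"
    unfolding coeffP using assms by (intro sum.cong) auto
  then have "coeff P 1 = 1" using Mpos by simp
  then have "P \<noteq> 0" by auto
  have "degree P \<le> 2 ^ (m - e)"
  proof (rule degree_le, intro allI impI)
    fix j :: nat assume j: "2 ^ (m - e) < j"
    have "2 ^ (e * i) < j" if "i < M" for i
    proof -
      have "e * (i + 1) \<le> e * M" using that by (intro mult_le_mono2) simp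
      moreover have "e * (i + 1) = e * i + e" by simp
      ultimately have "e * i \<le> m - e" using mM by linarith
      then have "(2::nat) ^ (e * i) \<le> 2 ^ (m - e)" by (rule power_increasing) simp_all
      then show ?thesis using j by linarith
    qed
    then show "coeff P j = 0" unfolding coeffP by (intro sum.neutral) auto
  qed
  then have kc: "card {x. T x = 0} \<le> 2 ^ (m - e)"
    using card_poly_roots_bound[OF \<open>P \<noteq> 0\<close>] polyP by simp
  have "(2::nat) ^ m = card (range T) * card {x. T x = 0}"
    using fibre_card[OF c2, of T] card unfolding T_def by (simp add: trace2_add[OF c2])
  also have "\<dots> \<le> card (subfield2 e :: 'f set) * 2 ^ (m - e)"
    by (intro mult_le_mono card_mono kc rT) simp
  finally have "(2::nat) ^ e * 2 ^ (m - e) \<le> card (subfield2 e :: 'f set) * 2 ^ (m - e)"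
    using assms by (simp flip: power_add add: dvd_imp_le)
  then show "2 ^ e \<le> card (subfield2 e :: 'f set)" by simp
qed




definition is_subfield :: "'f::field set \<Rightarrow> bool" where
  "is_subfield K \<longleftrightarrow> 0 \<in> K \<and> 1 \<in> K \<and> (\<forall>x\<in>K. \<forall>y\<in>K. x + y \<in> K \<and> x * y \<in> K)
     \<and> (\<forall>x\<in>K. - x \<in> K \<and> inverse x \<in> K)"

definition is_subspace :: "'f::field set \<Rightarrow> 'f set \<Rightarrow> bool" where
  "is_subspace K V \<longleftrightarrow> 0 \<in> V \<and> (\<forall>x\<in>V. \<forall>y\<in>V. x + y \<in> V) \<and> (\<forall>l\<in>K. \<forall>x\<in>V. l * x \<in> V)"

lemma subspace_sum:
  assumes "is_subspace K V" "finite A" "\<And>i. i \<in> A \<Longrightarrow> f i \<in> V"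
  shows "sum f A \<in> V"
  using assms(2,3)
proof (induction A rule: finite_induct)
  case empty then show ?case using assms(1) by (simp add: is_subspace_def)
next
  case (insert x F) then show ?case using assms(1) by (simp add: is_subspace_def)
qed

lemma span_sub:
  assumes "is_subspace K V" "set vs \<subseteq> V"
  shows "sub_span K vs \<subseteq> V"
proof
  fix v assume "v \<in> sub_span K vs"
  then obtain c where v: "v = (\<Sum>i<length vs. c i * vs ! i)" and c: "\<forall>i. c i \<in> K"
    unfolding sub_span_def by blast
  show "v \<in> V" unfolding v
  proof (rule subspace_sum[OF assms(1)])
    fix i assume "i \<in> {..<length vs}"
    then have "vs ! i \<in> V" using assms(2) by (metis lessThan_iff nth_mem subsetD)
    then show "c i * vs ! i \<in> V" using assms(1) c by (simp add: is_subspace_def)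
  qed simp
qed

lemma span_exists:
  assumes "finite V" "is_subfield K"
  shows "\<exists>vs. set vs \<subseteq> V \<and> V \<subseteq> sub_span K vs"
proof -
  obtain vs where vs: "set vs = V" using finite_list[OF assms(1)] by blast
  have "V \<subseteq> sub_span K vs"
  proof
    fix v assume "v \<in> V"
    then obtain i where i: "i < length vs" "vs ! i = v" using vs by (auto simp: in_set_conv_nth)
    have "(\<Sum>j<length vs. (if j = i then 1 else 0) * vs ! j) = (\<Sum>j<length vs. if j = i then vs ! j else 0)"
      by (intro sum.cong) auto
    also have "\<dots> = vs ! i" using i by (simp add: sum.delta')
    finally have "(\<Sum>j<length vs. (if j = i then 1 else 0) * vs ! j) = vs ! i" .
    moreover have "\<forall>j. (if j = i then 1 else 0) \<in> K" using assms(2) by (simp add: is_subfield_def)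
    ultimately show "v \<in> sub_span K vs" unfolding sub_span_def mem_Collect_eq
      using i by (intro exI[of _ "\<lambda>j. if j = i then 1 else 0"]) auto
  qed
  then show ?thesis using vs by blast
qed

lemma sum_remove_index:
  assumes "j < D"
  shows "(\<Sum>i<D. (g i :: 'a::comm_monoid_add)) = g j + (\<Sum>l<D - 1. g (if l < j then l else Suc l))"
proof -
  have "(\<Sum>i<D. g i) = g j + (\<Sum>i\<in>{..<D} - {j}. g i)"
    using assms by (simp add: sum.remove)
  also have "(\<Sum>i\<in>{..<D} - {j}. g i) = (\<Sum>l<D - 1. g (if l < j then l else Suc l))"
    by (rule sum.reindex_bij_witness[of _ "\<lambda>l. if l < j then l else Suc l"
          "\<lambda>i. if i < j then i else i - 1"]) (use assms in auto)
  finally show ?thesis .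
qed

lemma subspace_card:
  fixes K V :: "'f::{field,finite} set"
  assumes K: "is_subfield K" and V: "is_subspace K V"
  shows "card V = card K ^ sub_dim K V"
proof -
  define P where "P l \<longleftrightarrow> (\<exists>vs. length vs = l \<and> set vs \<subseteq> V \<and> V \<subseteq> sub_span K vs)" for l
  have ex: "\<exists>l. P l" using span_exists[OF _ K, of V] unfolding P_def by auto
  define D where "D = sub_dim K V"
  have DL: "D = (LEAST l. P l)" unfolding D_def sub_dim_def P_def by simp
  have "P D" unfolding DL using ex by (rule LeastI_ex)
  then obtain vs where vs: "length vs = D" "set vs \<subseteq> V" "V \<subseteq> sub_span K vs"
    unfolding P_def by blast
  have minimal: "\<not> P l" if "l < D" for l using not_less_Least[of l P] that DL by simp
  define \<phi> where "\<phi> c = (\<Sum>i<D. c i * vs ! i)" for c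
  define C :: "(nat \<Rightarrow> 'f) set" where "C = PiE {..<D} (\<lambda>_. K)"
  have Kp: "x + y \<in> K" "x * y \<in> K" "- x \<in> K" "inverse x \<in> K" if "x \<in> K" "y \<in> K" for x y
    using K that by (auto simp: is_subfield_def)
  have K01: "0 \<in> K" "1 \<in> K" using K by (auto simp: is_subfield_def)
  have Kminus: "x - y \<in> K" if "x \<in> K" "y \<in> K" for x y
    using Kp[OF that(1) Kp(3)[OF that(2) that(2)]] by simp
  have Kdiv: "x / y \<in> K" if "x \<in> K" "y \<in> K" for x y
    using Kp(2)[OF that(1) Kp(4)[OF that(2) that(2)]] by (simp add: divide_inverse)
  have img: "\<phi> ` C = V"
  proof
    show "\<phi> ` C \<subseteq> V"
    proof
      fix v assume "v \<in> \<phi> ` C"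
      then obtain c where c: "c \<in> C" "v = \<phi> c" by auto
      show "v \<in> V" unfolding c \<phi>_def
      proof (rule subspace_sum[OF V])
        fix i assume i: "i \<in> {..<D}"
        then have "vs ! i \<in> V" using vs by (metis lessThan_iff nth_mem subsetD)
        moreover have "c i \<in> K" using c i by (auto simp: C_def PiE_iff)
        ultimately show "c i * vs ! i \<in> V" using V by (simp add: is_subspace_def)
      qed simp
    qed
  next
    show "V \<subseteq> \<phi> ` C"
    proof
      fix v assume "v \<in> V"
      then obtain c where v: "v = (\<Sum>i<D. c i * vs ! i)" and c: "\<forall>i. c i \<in> K"
        using vs unfolding sub_span_def by blast
      have "restrict c {..<D} \<in> C" using c by (simp add: C_def)
      moreover have "\<phi> (restrict c {..<D}) = v" unfolding \<phi>_def v by (intro sum.cong) auto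
      ultimately show "v \<in> \<phi> ` C" by force
    qed
  qed
  have inj: "inj_on \<phi> C"
  proof (rule ccontr)
    assume "\<not> inj_on \<phi> C"
    then obtain c c' where cc: "c \<in> C" "c' \<in> C" "c \<noteq> c'" "\<phi> c = \<phi> c'"
      unfolding inj_on_def by blast
    then obtain j where j: "j < D" "c j \<noteq> c' j"
      unfolding C_def by (metis PiE_ext lessThan_iff)
    define \<delta> where "\<delta> i = (if i < D then c i - c' i else 0)" for i
    have \<delta>K: "\<delta> i \<in> K" for i using cc K01 Kminus unfolding \<delta>_def C_def by (auto simp: PiE_iff)
    have \<delta>j: "\<delta> j \<noteq> 0" using j by (simp add: \<delta>_def)
    have \<delta>sum: "(\<Sum>i<D. \<delta> i * vs ! i) = 0"
      using cc(4) unfolding \<phi>_def \<delta>_def by (simp add: left_diff_distrib sum_subtractf)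
    define vs' where "vs' = take j vs @ drop (Suc j) vs"
    have len': "length vs' = D - 1" using j vs by (simp add: vs'_def)
    have nth': "vs' ! l = vs ! (if l < j then l else Suc l)" if "l < D - 1" for l
      using that j vs by (auto simp: vs'_def nth_append min_def)
    have set': "set vs' \<subseteq> V" using vs set_take_subset set_drop_subset unfolding vs'_def by fastforce
    have "V \<subseteq> sub_span K vs'"
    proof
      fix v assume "v \<in> V"
      then obtain a where v: "v = (\<Sum>i<D. a i * vs ! i)" and a: "\<forall>i. a i \<in> K"
        using vs unfolding sub_span_def by blast
      define \<mu> where "\<mu> = a j / \<delta> j"
      define b where "b i = a i - \<mu> * \<delta> i" for i
      have bK: "b i \<in> K" for i unfolding b_def \<mu>_def
        by (intro Kminus a[rule_format] Kp(2) Kdiv \<delta>K)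
      have bj: "b j = 0" unfolding b_def \<mu>_def using \<delta>j by simp
      have "v = (\<Sum>i<D. a i * vs ! i) - \<mu> * (\<Sum>i<D. \<delta> i * vs ! i)" using v \<delta>sum by simp
      also have "\<dots> = (\<Sum>i<D. b i * vs ! i)"
        unfolding b_def by (simp add: sum_distrib_left left_diff_distrib sum_subtractf mult.assoc)
      also have "\<dots> = (\<Sum>l<D - 1. b (if l < j then l else Suc l) * vs ! (if l < j then l else Suc l))"
        using sum_remove_index[OF j(1), of "\<lambda>i. b i * vs ! i"] bj by simp
      also have "\<dots> = (\<Sum>l<length vs'. b (if l < j then l else Suc l) * vs' ! l)"
        using nth' len' by (intro sum.cong) auto
      finally show "v \<in> sub_span K vs'" unfolding sub_span_def mem_Collect_eq
        using bK by (intro exI[of _ "\<lambda>l. b (if l < j then l else Suc l)"]) auto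
    qed
    then have "P (D - 1)" unfolding P_def using len' set' by blast
    moreover have "D - 1 < D" using j by simp
    ultimately show False using minimal by blast
  qed
  have "card V = card C" using img inj card_image by fastforce
  also have "\<dots> = card K ^ D" unfolding C_def by (simp add: card_PiE)
  finally show ?thesis unfolding D_def .
qed




definition sg :: "'f::field \<Rightarrow> real" where "sg v = (if v = 0 then 1 else -1)"

lemma sg01: "sg v = 1 \<or> sg v = -1" by (simp add: sg_def)
lemma sg_sq: "sg v * sg v = 1" by (simp add: sg_def)

lemma c2_01_add:
  assumes "(2::'f::field) = 0" "(u::'f) = 0 \<or> u = 1" "v = 0 \<or> v = 1"
  shows "u + v = 0 \<or> u + v = 1"
proof -
  have "(1::'f) + 1 = 0" using assms(1) by (metis one_add_one)
  then show ?thesis using assms(2,3) by auto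
qed

lemma c2_double: assumes "(2::'f::field) = 0" shows "(x::'f) + x = 0"
  using assms by (metis mult_2 mult_zero_left)

lemma sg_add:
  assumes "(2::'f::field) = 0" "(u::'f) = 0 \<or> u = 1" "v = 0 \<or> v = 1"
  shows "sg (u + v) = sg u * sg v"
proof -
  have "(1::'f) + 1 = 0" using assms(1) by (metis one_add_one)
  then show ?thesis using assms(2,3) by (auto simp: sg_def)
qed

lemma char_sum:
  fixes \<phi> :: "'f::{field,finite} \<Rightarrow> 'f"
  assumes c2: "(2::'f) = 0"
    and cl: "\<And>x y. x \<in> A \<Longrightarrow> y \<in> A \<Longrightarrow> x + y \<in> A"
    and v01: "\<And>x. x \<in> A \<Longrightarrow> \<phi> x = 0 \<or> \<phi> x = 1"
    and add: "\<And>x y. x \<in> A \<Longrightarrow> y \<in> A \<Longrightarrow> \<phi> (x + y) = \<phi> x + \<phi> y"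
  shows "(\<Sum>x\<in>A. sg (\<phi> x)) = (if \<forall>x\<in>A. \<phi> x = 0 then real (card A) else 0)"
proof (cases "\<forall>x\<in>A. \<phi> x = 0")
  case True
  then have "(\<Sum>x\<in>A. sg (\<phi> x)) = (\<Sum>x\<in>A. 1)" by (intro sum.cong) (auto simp: sg_def)
  then show ?thesis using True by simp
next
  case False
  then obtain x0 where x0: "x0 \<in> A" "\<phi> x0 = 1" using v01 by blast
  have inv: "x + x0 + x0 = x" for x using c2_minus[OF c2] by (metis add_diff_cancel)
  have "(\<Sum>x\<in>A. sg (\<phi> x)) = (\<Sum>x\<in>A. sg (\<phi> (x + x0)))"
    by (rule sum.reindex_bij_witness[of _ "\<lambda>x. x + x0" "\<lambda>x. x + x0"]) (use inv cl x0 in auto)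
  also have "\<dots> = (\<Sum>x\<in>A. - sg (\<phi> x))"
  proof (rule sum.cong)
    fix x assume "x \<in> A"
    then have "sg (\<phi> (x + x0)) = sg (\<phi> x) * sg (\<phi> x0)"
      using add[OF _ x0(1)] sg_add[OF c2 v01[OF \<open>x \<in> A\<close>] v01[OF x0(1)]] by simp
    then show "sg (\<phi> (x + x0)) = - sg (\<phi> x)" using x0 by (simp add: sg_def)
  qed simp
  finally have "(\<Sum>x\<in>A. sg (\<phi> x)) = 0" by (simp add: sum_negf)
  then show ?thesis using False by auto
qed

locale walsh =
  fixes f tr :: "'f::{field,finite} \<Rightarrow> 'f"
  assumes c2: "(2::'f) = 0"
    and f01: "\<And>x. f x = 0 \<or> f x = 1" and f0: "f 0 = 0"
    and hadd: "\<And>x x' y. f (x + x' + y) + f (x + x') + f y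
                 = (f (x + y) + f x + f y) + (f (x' + y) + f x' + f y)"
    and tr01: "\<And>x. tr x = 0 \<or> tr x = 1"
    and tradd: "\<And>x y. tr (x + y) = tr x + tr y"
    and trnd: "\<And>z. z \<noteq> 0 \<Longrightarrow> \<exists>y. tr (y * z) \<noteq> 0"
begin

definition H where "H x y = f (x + y) + f x + f y"
definition W where "W b = (\<Sum>x\<in>UNIV. sg (f x + tr (b * x)))"
definition R where "R = {x. \<forall>y. H x y = 0}"

lemma tr0: "tr 0 = 0" using tradd[of 0 0] by (metis add.right_neutral add_left_cancel)

lemma H01: "H x y = 0 \<or> H x y = 1"
  unfolding H_def by (intro c2_01_add[OF c2] f01)

lemma H_add: "H (x + x') y = H x y + H x' y"
  using hadd[of x x' y] by (simp add: H_def add.assoc)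

lemma H_sym: "H x y = H y x" by (simp add: H_def add.commute add.left_commute)

lemma tr_sum: "(\<Sum>b\<in>UNIV. sg (tr (b * x))) = (if x = 0 then real (card (UNIV :: 'f set)) else 0)"
proof -
  have "(\<Sum>b\<in>UNIV. sg (tr (b * x))) = (if \<forall>b\<in>UNIV. tr (b * x) = 0 then real (card (UNIV :: 'f set)) else 0)"
    by (rule char_sum[OF c2]) (auto simp: tr01 tradd distrib_right)
  moreover have "(\<forall>b\<in>UNIV. tr (b * x) = 0) \<longleftrightarrow> x = 0"
    using trnd by (auto simp: tr0) 
  ultimately show ?thesis by simp
qed

lemma g01: "f x + tr (b * x) = 0 \<or> f x + tr (b * x) = 1"
  by (intro c2_01_add[OF c2] f01 tr01)

lemma W_expand: "W b = (\<Sum>x\<in>UNIV. sg (f x) * sg (tr (b * x)))"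
  unfolding W_def by (intro sum.cong refl sg_add[OF c2 f01 tr01])

lemma W_sum: "(\<Sum>b\<in>UNIV. W b) = real (card (UNIV :: 'f set))"
proof -
  have "(\<Sum>b\<in>UNIV. W b) = (\<Sum>x\<in>UNIV. sg (f x) * (\<Sum>b\<in>UNIV. sg (tr (b * x))))"
    unfolding W_expand by (subst sum.swap) (simp add: sum_distrib_left)
  also have "\<dots> = (\<Sum>x\<in>UNIV. sg (f x) * (if x = 0 then real (card (UNIV :: 'f set)) else 0))"
    by (simp add: tr_sum)
  also have "\<dots> = sg (f 0) * real (card (UNIV :: 'f set))"
    by (simp add: if_distrib[of "\<lambda>v. sg (f _) * v"] cong: if_cong)
  finally show ?thesis by (simp add: f0 sg_def)
qed

lemma W_sq_sum: "(\<Sum>b\<in>UNIV. W b * W b) = real (card (UNIV :: 'f set)) * real (card (UNIV :: 'f set))"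
proof -
  have tt: "sg (tr (b * x)) * sg (tr (b * y)) = sg (tr (b * (x + y)))" for b x y
    using sg_add[OF c2 tr01 tr01, of "b * x" "b * y"] by (simp add: tradd distrib_left)
  have "(\<Sum>b\<in>UNIV. W b * W b)
      = (\<Sum>b\<in>UNIV. \<Sum>x\<in>UNIV. \<Sum>y\<in>UNIV. (sg (f x) * sg (f y)) * sg (tr (b * (x + y))))"
    unfolding W_expand sum_product by (simp add: tt[symmetric] mult_ac)
  also have "\<dots> = (\<Sum>x\<in>UNIV. \<Sum>b\<in>UNIV. \<Sum>y\<in>UNIV. (sg (f x) * sg (f y)) * sg (tr (b * (x + y))))"
    by (rule sum.swap)
  also have "\<dots> = (\<Sum>x\<in>UNIV. \<Sum>y\<in>UNIV. \<Sum>b\<in>UNIV. (sg (f x) * sg (f y)) * sg (tr (b * (x + y))))"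
    by (rule sum.cong[OF refl], rule sum.swap)
  also have "\<dots> = (\<Sum>x\<in>UNIV. \<Sum>y\<in>UNIV. (sg (f x) * sg (f y)) * (\<Sum>b\<in>UNIV. sg (tr (b * (x + y)))))"
    by (simp add: sum_distrib_left)
  also have "\<dots> = (\<Sum>x\<in>UNIV. \<Sum>y\<in>UNIV. (sg (f x) * sg (f y)) *
        (if y = x then real (card (UNIV :: 'f set)) else 0))"
  proof (rule sum.cong[OF refl], rule sum.cong[OF refl])
    fix x y :: 'f
    have "x + y = 0 \<longleftrightarrow> y = x" using c2_minus[OF c2, of y x] by (metis eq_iff_diff_eq_0 add.commute)
    then show "sg (f x) * sg (f y) * (\<Sum>b\<in>UNIV. sg (tr (b * (x + y)))) =
        sg (f x) * sg (f y) * (if y = x then real (card (UNIV :: 'f set)) else 0)"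
      by (simp add: tr_sum)
  qed
  also have "\<dots> = (\<Sum>x\<in>(UNIV::'f set). real (card (UNIV :: 'f set)))"
  proof (rule sum.cong[OF refl])
    fix x :: 'f assume "x \<in> UNIV"
    have "(\<Sum>y\<in>UNIV. (sg (f x) * sg (f y)) * (if y = x then real (card (UNIV :: 'f set)) else 0))
        = (\<Sum>y\<in>UNIV. if y = x then (sg (f x) * sg (f y)) * real (card (UNIV :: 'f set)) else 0)"
      by (rule sum.cong[OF refl]) simp
    also have "\<dots> = (sg (f x) * sg (f x)) * real (card (UNIV :: 'f set))"
      by (simp add: sum.delta')
    finally show "(\<Sum>y\<in>UNIV. (sg (f x) * sg (f y)) * (if y = x then real (card (UNIV :: 'f set)) else 0))
        = real (card (UNIV :: 'f set))" by (simp add: sg_sq)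
  qed
  finally show ?thesis by simp
qed

lemma R0: "0 \<in> R"
  unfolding R_def H_def using f0 c2_double[OF c2] by simp

lemma R_add: "x \<in> R \<Longrightarrow> y \<in> R \<Longrightarrow> x + y \<in> R"
  unfolding R_def by (simp add: H_add)

lemma W_sq:
  "W b * W b = real (card (UNIV :: 'f set)) *
     (if \<forall>z\<in>R. f z + tr (b * z) = 0 then real (card R) else 0)"
proof -
  define g where "g z = f z + tr (b * z)" for z
  have g01': "g z = 0 \<or> g z = 1" for z unfolding g_def by (rule g01)
  have gadd: "g (x + z) = H x z + (g x + g z)" for x z
  proof -
    have "H x z + f x + f z = f (x + z) + (f x + f x) + (f z + f z)"
      unfolding H_def by (simp add: add_ac)
    then have "f (x + z) = H x z + f x + f z" by (simp add: c2_double[OF c2])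
    then show ?thesis unfolding g_def by (simp add: tradd distrib_left add_ac)
  qed
  have "W b * W b = (\<Sum>x\<in>UNIV. \<Sum>y\<in>UNIV. sg (g x) * sg (g y))"
    unfolding W_def g_def sum_product ..
  also have "\<dots> = (\<Sum>x\<in>UNIV. \<Sum>z\<in>UNIV. sg (g x) * sg (g (x + z)))"
  proof (rule sum.cong[OF refl])
    fix x :: 'f
    have inv: "x + (x + z) = z" for z by (simp add: add.assoc[symmetric] c2_double[OF c2])
    show "(\<Sum>y\<in>UNIV. sg (g x) * sg (g y)) = (\<Sum>z\<in>UNIV. sg (g x) * sg (g (x + z)))"
      by (rule sum.reindex_bij_witness[of _ "\<lambda>y. x + y" "\<lambda>y. x + y"]) (use inv in auto)
  qed
  also have "\<dots> = (\<Sum>x\<in>UNIV. \<Sum>z\<in>UNIV. sg (g z) * sg (H x z))"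
  proof (rule sum.cong[OF refl], rule sum.cong[OF refl])
    fix x z
    have "sg (g (x + z)) = sg (H x z) * (sg (g x) * sg (g z))"
      unfolding gadd by (simp add: sg_add[OF c2 H01 c2_01_add[OF c2 g01' g01']] sg_add[OF c2 g01' g01'])
    then show "sg (g x) * sg (g (x + z)) = sg (g z) * sg (H x z)"
      using sg_sq[of "g x"] by (simp add: algebra_simps)
  qed
  also have "\<dots> = (\<Sum>z\<in>UNIV. \<Sum>x\<in>UNIV. sg (g z) * sg (H x z))"
    by (rule sum.swap)
  also have "\<dots> = (\<Sum>z\<in>UNIV. sg (g z) * (\<Sum>x\<in>UNIV. sg (H x z)))"
    by (simp add: sum_distrib_left)
  also have "\<dots> = (\<Sum>z\<in>UNIV. sg (g z) * (if z \<in> R then real (card (UNIV :: 'f set)) else 0))"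
  proof (rule sum.cong[OF refl])
    fix z
    have "(\<Sum>x\<in>UNIV. sg (H x z)) = (if \<forall>x\<in>UNIV. H x z = 0 then real (card (UNIV :: 'f set)) else 0)"
      by (rule char_sum[OF c2]) (auto simp: H01 H_add)
    moreover have "(\<forall>x\<in>UNIV. H x z = 0) \<longleftrightarrow> z \<in> R" unfolding R_def using H_sym by auto
    ultimately show "sg (g z) * (\<Sum>x\<in>UNIV. sg (H x z)) =
        sg (g z) * (if z \<in> R then real (card (UNIV :: 'f set)) else 0)" by simp
  qed
  also have "\<dots> = real (card (UNIV :: 'f set)) * (\<Sum>z\<in>R. sg (g z))"
    by (simp add: if_distrib[of "\<lambda>v. _ * v"] sum.If_cases sum_distrib_left mult.commute cong: if_cong)
  also have "(\<Sum>z\<in>R. sg (g z)) = (if \<forall>z\<in>R. g z = 0 then real (card R) else 0)"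
  proof (rule char_sum[OF c2 R_add g01'])
    fix x y assume "x \<in> R" "y \<in> R"
    then show "g (x + y) = g x + g y" unfolding gadd by (simp add: R_def)
  qed
  finally show ?thesis unfolding g_def .
qed

lemma W_count:
  assumes "s > 0" "eps = 1 \<or> eps = -1"
  shows "real (card {b. W b = eps * s}) =
    (if s * s = real (card (UNIV :: 'f set)) * real (card R)
     then (real (card (UNIV :: 'f set)) * real (card (UNIV :: 'f set)) / (s * s)
           + eps * real (card (UNIV :: 'f set)) / s) / 2 else 0)"
proof (cases "s * s = real (card (UNIV :: 'f set)) * real (card R)")
  case False
  have "{b. W b = eps * s} = {}"
  proof (rule ccontr)
    assume "{b. W b = eps * s} \<noteq> {}"
    then obtain b where b: "W b = eps * s" by auto
    then have "W b * W b = s * s" using assms(2) by auto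
    then show False using False W_sq[of b] assms(1) by (auto split: if_splits)
  qed
  then show ?thesis using False by simp
next
  case True
  define Nn where "Nn = real (card (UNIV :: 'f set))"
  define P where "P = {b. W b = s}"
  define M where "M = {b. W b = - s}"
  have Wv: "W b = 0 \<or> W b = s \<or> W b = - s" for b
  proof -
    have "W b * W b = 0 \<or> W b * W b = s * s" using W_sq[of b] True by auto
    then show ?thesis by (metis mult_eq_0_iff square_eq_iff)
  qed
  have pw1: "W b = s * (of_bool (b \<in> P) - of_bool (b \<in> M))" for b
    using Wv[of b] assms(1) by (auto simp: P_def M_def)
  have pw2: "W b * W b = s * s * (of_bool (b \<in> P) + of_bool (b \<in> M))" for b
    using Wv[of b] assms(1) by (auto simp: P_def M_def)
  have cP: "(\<Sum>b\<in>UNIV. (of_bool (b \<in> P) :: real)) = real (card P)"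
    by (subst sum_of_bool_eq) auto
  have cM: "(\<Sum>b\<in>UNIV. (of_bool (b \<in> M) :: real)) = real (card M)"
    by (subst sum_of_bool_eq) auto
  have "(\<Sum>b\<in>UNIV. s * (of_bool (b \<in> P) - of_bool (b \<in> M))) = s * ((\<Sum>b\<in>UNIV. (of_bool (b \<in> P) :: real)) - (\<Sum>b\<in>UNIV. of_bool (b \<in> M)))"
    by (simp only: sum_distrib_left[symmetric] sum_subtractf)
  then have e1: "Nn = s * (real (card P) - real (card M))"
    using W_sum unfolding Nn_def pw1 cP cM by simp
  have "(\<Sum>b\<in>UNIV. s * s * (of_bool (b \<in> P) + of_bool (b \<in> M))) = s * s * ((\<Sum>b\<in>UNIV. (of_bool (b \<in> P) :: real)) + (\<Sum>b\<in>UNIV. of_bool (b \<in> M)))"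
    by (simp only: sum_distrib_left[symmetric] sum.distrib)
  then have e2: "Nn * Nn = s * s * (real (card P) + real (card M))"
    using W_sq_sum unfolding Nn_def pw2 cP cM by simp
  have d1: "real (card P) - real (card M) = Nn / s" using e1 assms(1) by (simp add: field_simps)
  have d2: "real (card P) + real (card M) = Nn * Nn / (s * s)" using e2 assms(1) by (simp add: field_simps)
  have P2: "real (card P) = (Nn * Nn / (s * s) + Nn / s) / 2" unfolding d1[symmetric] d2[symmetric] by simp
  have M2: "real (card M) = (Nn * Nn / (s * s) - Nn / s) / 2" unfolding d1[symmetric] d2[symmetric] by simp
  show ?thesis
  proof (cases "eps = 1")
    case True
    then have "{b. W b = eps * s} = P" by (simp add: P_def)
    then show ?thesis using \<open>s * s = _\<close> True P2 unfolding Nn_def by simp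
  next
    case False
    then have "eps = -1" using assms(2) by simp
    then have "{b. W b = eps * s} = M" by (simp add: M_def)
    then show ?thesis using \<open>s * s = _\<close> \<open>eps = -1\<close> M2 unfolding Nn_def by simp
  qed
qed

end




lemma nt_cancel:
  fixes N D e x :: nat
  assumes "e > 0" "coprime (2 * N) D" "2 * e * N dvd x * (e * D)"
  shows "2 * N dvd x"
proof -
  have "e * (2 * N) dvd e * (x * D)" using assms(3) by (simp add: mult_ac)
  then have "2 * N dvd x * D" using assms(1) nat_mult_dvd_cancel1 by blast
  then show ?thesis using coprime_dvd_mult_left_iff[OF assms(2)] by simp
qed

lemma nt_facts:
  fixes N D e t t' :: nat
  assumes e: "e > 0" and cop: "coprime N D" and odd: "odd D"
    and t: "1 \<le> t" "t < N" and t': "1 \<le> t'" "t' < N"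
  shows "(t * (e * D)) mod (2 * e * N) \<noteq> 0"
    and "(t * (e * D)) mod (2 * e * N) \<noteq> e * N"
    and "t \<noteq> t' \<Longrightarrow> (t * (e * D)) mod (2 * e * N) \<noteq> (t' * (e * D)) mod (2 * e * N)"
    and "(t * (e * D)) mod (2 * e * N) + (t' * (e * D)) mod (2 * e * N) \<noteq> 2 * e * N"
proof -
  have cop2: "coprime (2 * N) D" using cop odd by simp
  show "(t * (e * D)) mod (2 * e * N) \<noteq> 0"
  proof
    assume "(t * (e * D)) mod (2 * e * N) = 0"
    then have "2 * e * N dvd t * (e * D)" by (rule mod_0_imp_dvd)
    then have "2 * N dvd t" using nt_cancel[OF e cop2] by blast
    then have "2 * N \<le> t" using t by (intro dvd_imp_le) auto
    then show False using t by simp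
  qed
  show "(t * (e * D)) mod (2 * e * N) \<noteq> e * N"
  proof
    assume h: "(t * (e * D)) mod (2 * e * N) = e * N"
    define q where "q = (t * (e * D)) div (2 * e * N)"
    have "t * (e * D) = q * (2 * e * N) + e * N"
      unfolding q_def using div_mult_mod_eq[of "t * (e * D)" "2 * e * N"] h by linarith
    then have "e * (t * D) = e * (N * (2 * q + 1))"
      by (simp add: algebra_simps)
    then have "t * D = N * (2 * q + 1)" using e by simp
    then have "N dvd t * D" by (metis dvd_triv_left)
    then have "N dvd t" using coprime_dvd_mult_left_iff[OF cop] by simp
    then have "N \<le> t" using t by (intro dvd_imp_le) auto
    then show False using t by simp
  qed
  show "(t * (e * D)) mod (2 * e * N) \<noteq> (t' * (e * D)) mod (2 * e * N)" if "t \<noteq> t'"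
  proof
    assume h: "(t * (e * D)) mod (2 * e * N) = (t' * (e * D)) mod (2 * e * N)"
    show False
    proof (cases "t' < t")
      case True
      then have le: "t' * (e * D) \<le> t * (e * D)" by (intro mult_le_mono1) simp
      have "2 * e * N dvd t * (e * D) - t' * (e * D)"
        using h by (simp only: mod_eq_dvd_iff_nat[OF le])
      then have "2 * e * N dvd (t - t') * (e * D)" by (simp add: diff_mult_distrib)
      then have "2 * N dvd t - t'" by (rule nt_cancel[OF e cop2])
      then have "2 * N \<le> t - t'" using True by (intro dvd_imp_le) auto
      then show False using True t t' by simp
    next
      case False
      then have lt: "t < t'" using that by simp
      then have le: "t * (e * D) \<le> t' * (e * D)" by (intro mult_le_mono1) simp
      have "2 * e * N dvd t' * (e * D) - t * (e * D)"
        using h[symmetric] by (simp only: mod_eq_dvd_iff_nat[OF le])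
      then have "2 * e * N dvd (t' - t) * (e * D)" by (simp add: diff_mult_distrib)
      then have "2 * N dvd t' - t" by (rule nt_cancel[OF e cop2])
      then have "2 * N \<le> t' - t" using lt by (intro dvd_imp_le) auto
      then show False using lt t t' by simp
    qed
  qed
  show "(t * (e * D)) mod (2 * e * N) + (t' * (e * D)) mod (2 * e * N) \<noteq> 2 * e * N"
  proof
    assume h: "(t * (e * D)) mod (2 * e * N) + (t' * (e * D)) mod (2 * e * N) = 2 * e * N"
    have "(t * (e * D) + t' * (e * D)) mod (2 * e * N)
        = ((t * (e * D)) mod (2 * e * N) + (t' * (e * D)) mod (2 * e * N)) mod (2 * e * N)"
      by (rule mod_add_eq[symmetric])
    then have "(t * (e * D) + t' * (e * D)) mod (2 * e * N) = 0" unfolding h by simp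
    then have "2 * e * N dvd t * (e * D) + t' * (e * D)" by (rule mod_0_imp_dvd)
    then have "2 * e * N dvd (t + t') * (e * D)" by (simp add: add_mult_distrib)
    then have "2 * N dvd t + t'" by (rule nt_cancel[OF e cop2])
    then have "2 * N \<le> t + t'" using t by (intro dvd_imp_le) auto
    then show False using t t' by simp
  qed
qed




lemma c2_cancel3: assumes "(2::'f::field) = 0" shows "((A::'f) + B + C) + A + B = C"
proof -
  have "(A + B + C) + A + B = C + (A + A) + (B + B)" by (simp add: algebra_simps)
  then show ?thesis by (simp add: c2_double[OF assms])
qed

lemma c2_quad: assumes "(2::'f::field) = 0"
  shows "((x::'f) + y) ^ (2 ^ s + 1) = x ^ (2 ^ s + 1) + y ^ (2 ^ s + 1) + (x ^ (2 ^ s) * y + x * y ^ (2 ^ s))"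
proof -
  have "(x + y) ^ (2 ^ s + 1) = (x ^ (2 ^ s) + y ^ (2 ^ s)) * (x + y)"
    by (simp add: c2_frob_add[OF assms])
  then show ?thesis by (simp add: algebra_simps)
qed

lemma tr_quad: assumes "(2::'f::{field,finite}) = 0"
  shows "trace2 c b (a * ((x::'f) + y) ^ (2 ^ s + 1)) + trace2 c b (a * x ^ (2 ^ s + 1))
       + trace2 c b (a * y ^ (2 ^ s + 1)) = trace2 c b (a * (x ^ (2 ^ s) * y + x * y ^ (2 ^ s)))"
  unfolding c2_quad[OF assms] distrib_left trace2_add[OF assms]
  by (rule c2_cancel3[OF assms])

locale ctx =
  fixes m n d e k :: nat and p :: "'f::{field,finite}"
  assumes m_pos: "m > 0" and n_pos: "n > 0" and d_pos: "d > 0" and e_pos: "e > 0" and k_pos: "k > 0"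
    and m2n: "m = 2 * n" and egcd: "e = gcd n d" and egcd2: "e = gcd m d"
    and k_le: "k \<le> n div e"
    and card: "card (UNIV :: 'f set) = 2 ^ m"
begin

lemma c2: "(2::'f) = 0" using char2_of_card[OF card m_pos] .
lemma FR: "(x::'f) ^ (2 ^ m) = x" using frob_of_card[OF card] .

lemma e_dvd_n: "e dvd n" using egcd by simp
lemma e_dvd_d: "e dvd d" using egcd by simp
lemma e_dvd_m: "e dvd m" using egcd2 by simp

definition NN where "NN = n div e"
definition DD where "DD = d div e"
lemma n_eq: "n = e * NN" unfolding NN_def using e_dvd_n by simp
lemma d_eq: "d = e * DD" unfolding DD_def using e_dvd_d by simp
lemma m_eq: "m = 2 * e * NN" using m2n n_eq by simp

lemma cop: "coprime NN DD"
  unfolding NN_def DD_def using div_gcd_coprime[of n d] n_pos egcd by simp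

lemma oddD: "odd DD"
proof
  assume "even DD"
  then obtain u where u: "DD = 2 * u" by blast
  have "2 * e dvd d" using d_eq u by (simp add: mult_ac)
  moreover have "2 * e dvd m" using m_eq by simp
  ultimately have "2 * e dvd gcd m d" by simp
  then have "2 * e dvd e" using egcd2 by simp
  then show False using e_pos by (auto dest: dvd_imp_le)
qed

definition sig :: "nat \<Rightarrow> nat" where "sig j = ((n div e - j) * d) mod m"

lemma sig_lt: "sig j < m" unfolding sig_def using m_pos by simp

lemma sig_t: "sig j = ((NN - j) * (e * DD)) mod (2 * e * NN)"
  unfolding sig_def NN_def[symmetric] using d_eq m_eq by simp

lemma t_range: assumes "j \<in> {1..<k}" shows "1 \<le> NN - j" "NN - j < NN"
  using assms k_le unfolding NN_def by auto

lemma sig_pos: "j \<in> {1..<k} \<Longrightarrow> sig j \<noteq> 0"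
  unfolding sig_t using nt_facts(1)[OF e_pos cop oddD t_range t_range] by blast

lemma sig_ne_n: "j \<in> {1..<k} \<Longrightarrow> sig j \<noteq> n"
  unfolding sig_t using nt_facts(2)[OF e_pos cop oddD t_range t_range] n_eq by metis

lemma sig_inj: "j \<in> {1..<k} \<Longrightarrow> j' \<in> {1..<k} \<Longrightarrow> j \<noteq> j' \<Longrightarrow> sig j \<noteq> sig j'"
proof -
  assume a: "j \<in> {1..<k}" "j' \<in> {1..<k}" "j \<noteq> j'"
  then have "NN - j \<noteq> NN - j'" using k_le unfolding NN_def by auto
  then show "sig j \<noteq> sig j'"
    unfolding sig_t using nt_facts(3)[OF e_pos cop oddD t_range[OF a(1)] t_range[OF a(2)]] by blast
qed

lemma sig_sum: "j \<in> {1..<k} \<Longrightarrow> j' \<in> {1..<k} \<Longrightarrow> sig j + sig j' \<noteq> m"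
  unfolding sig_t using nt_facts(4)[OF e_pos cop oddD t_range t_range] m_eq by metis

lemma e_dvd_sig: "e dvd sig j"
  unfolding sig_def using e_dvd_d e_dvd_m by (simp add: dvd_mod)

lemma pow_s: "(x::'f) ^ (2 ^ ((n div e - j) * d)) = x ^ (2 ^ sig j)"
  unfolding sig_def by (rule fixed_mod[OF FR])

lemma pow_N0: "(x::'f) ^ (2 ^ (n * d div e)) = x ^ (2 ^ n)"
proof -
  obtain u where u: "DD = 2 * u + 1" using oddD oddE by blast
  have "n * d div e = n * DD" unfolding DD_def using div_mult_swap[OF e_dvd_d, of n] by simp
  also have "\<dots> = n + m * u" using u m2n by (simp add: algebra_simps)
  finally have "(n * d div e) mod m = n" using m2n n_pos by simp
  then show ?thesis using fixed_mod[OF FR, of x "n * d div e"] by simp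
qed

definition L :: "(nat \<Rightarrow> 'f) \<Rightarrow> 'f \<Rightarrow> 'f" where
  "L a x = a 0 * x ^ (2 ^ n)
     + (\<Sum>j\<in>{1..<k}. a j * x ^ (2 ^ sig j) + a j ^ (2 ^ (m - sig j)) * x ^ (2 ^ (m - sig j)))"

lemma partj:
  "trace2 m e (a * ((x::'f) ^ (2 ^ ((n div e - j) * d)) * y + x * y ^ (2 ^ ((n div e - j) * d))))
   = trace2 m e (y * (a * x ^ (2 ^ sig j) + a ^ (2 ^ (m - sig j)) * x ^ (2 ^ (m - sig j))))"
proof -
  define s where "s = sig j"
  have sm: "s < m" using sig_lt s_def by simp
  have ed: "e dvd m - s" using e_dvd_m e_dvd_sig s_def by (simp add: dvd_diff_nat)
  have fw: "(a * x * y ^ (2 ^ s)) ^ (2 ^ m) = a * x * y ^ (2 ^ s)" by (rule FR)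
  have "trace2 m e (a * x * y ^ (2 ^ s)) = trace2 m e ((a * x * y ^ (2 ^ s)) ^ (2 ^ (m - s)))"
    by (rule trace2_shift_dvd[OF e_pos e_dvd_m fw ed, symmetric])
  also have "(a * x * y ^ (2 ^ s)) ^ (2 ^ (m - s)) = a ^ (2 ^ (m - s)) * x ^ (2 ^ (m - s)) * y"
  proof -
    have "(y ^ (2 ^ s)) ^ (2 ^ (m - s)) = y" using sm FR by (simp add: pow_pow2)
    then show ?thesis by (simp add: power_mult_distrib)
  qed
  finally have t2: "trace2 m e (a * x * y ^ (2 ^ s)) = trace2 m e (y * (a ^ (2 ^ (m - s)) * x ^ (2 ^ (m - s))))"
    by (simp add: mult_ac)
  show ?thesis unfolding pow_s s_def[symmetric]
    by (simp add: distrib_left trace2_add[OF c2] t2[symmetric] mult_ac)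
qed

lemma part0:
  assumes "a0 \<in> subfield2 n"
  shows "trace2 n e (a0 * ((x::'f) + y) ^ (2 ^ (n * d div e) + 1)) + trace2 n e (a0 * x ^ (2 ^ (n * d div e) + 1))
       + trace2 n e (a0 * y ^ (2 ^ (n * d div e) + 1)) = trace2 m e (y * (a0 * x ^ (2 ^ n)))"
proof -
  have a0: "a0 ^ (2 ^ n) = a0" using assms by (simp add: subfield2_def)
  define w where "w = y * (a0 * x ^ (2 ^ n))"
  have "w ^ (2 ^ n) = y ^ (2 ^ n) * a0 * x"
  proof -
    have "(x ^ (2 ^ n)) ^ (2 ^ n) = x" using FR m2n by (simp add: pow_pow2 mult_2)
    then show ?thesis unfolding w_def using a0 by (simp add: power_mult_distrib)
  qed
  then have ww: "w + w ^ (2 ^ n) = a0 * (x ^ (2 ^ n) * y + x * y ^ (2 ^ n))"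
    unfolding w_def by (simp add: algebra_simps)
  show ?thesis
    unfolding tr_quad[OF c2] pow_N0 m2n trace2_half[OF c2 e_pos e_dvd_n] w_def[symmetric] ww ..
qed

lemma Bform_eq:
  assumes "a \<in> avecs n k"
  shows "Bform m n d e k a x y = trace2 m e (y * L a x)"
proof -
  define T0 where "T0 z = trace2 n e (a 0 * z ^ (2 ^ (n * d div e) + 1))" for z :: 'f
  define S where "S z = (\<Sum>j\<in>{1..<k}. trace2 m e (a j * z ^ (2 ^ ((n div e - j) * d) + 1)))" for z :: 'f
  define T1 where "T1 z = trace2 m e (a k * z)" for z :: 'f
  have Q: "Qform m n d e k a z = T0 z + S z + T1 z" for z
    unfolding Qform_def T0_def S_def T1_def ..
  have "Bform m n d e k a x y = (T0 (x + y) + T0 x + T0 y) + (S (x + y) + S x + S y) + (T1 (x + y) + T1 x + T1 y)"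
    unfolding Bform_def Q c2_minus[OF c2] by (simp add: add_ac)
  also have "T0 (x + y) + T0 x + T0 y = trace2 m e (y * (a 0 * x ^ (2 ^ n)))"
    unfolding T0_def by (rule part0) (use assms in \<open>simp add: avecs_def\<close>)
  also have "S (x + y) + S x + S y = (\<Sum>j\<in>{1..<k}. trace2 m e (y * (a j * x ^ (2 ^ sig j) + a j ^ (2 ^ (m - sig j)) * x ^ (2 ^ (m - sig j)))))"
    unfolding S_def sum.distrib[symmetric] tr_quad[OF c2] partj ..
  also have "T1 (x + y) + T1 x + T1 y = 0"
    unfolding T1_def distrib_left trace2_add[OF c2] by (simp add: c2_cancel3[OF c2, of _ _ 0, simplified] c2_double[OF c2] add_ac)
  finally show ?thesis
    unfolding L_def distrib_left sum_distrib_left trace2_add[OF c2] trace2_sum[OF c2] by simp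
qed

end




context ctx begin

abbreviation K :: "'f set" where "K \<equiv> subfield2 e"

lemma K_subfield: "is_subfield K"
  unfolding is_subfield_def subfield2_def
  by (auto simp: c2_frob_add[OF c2] power_mult_distrib c2_neg[OF c2] power_inverse)

lemma K_fix: "l \<in> K \<Longrightarrow> e dvd s \<Longrightarrow> (l::'f) ^ (2 ^ s) = l"
  unfolding subfield2_def by (auto intro: fixed_dvd)

lemma L_add: "L a (x + x') = L a x + L a x'"
  unfolding L_def c2_frob_add[OF c2] by (simp add: algebra_simps sum.distrib)

lemma L_scal:
  assumes "l \<in> K"
  shows "L a (l * x) = l * L a x"
proof -
  have s1: "l ^ (2 ^ sig j) = l" for j using K_fix[OF assms e_dvd_sig] .
  have s2: "l ^ (2 ^ (m - sig j)) = l" for j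
    using K_fix[OF assms] e_dvd_sig e_dvd_m by (simp add: dvd_diff_nat)
  have s3: "l ^ (2 ^ n) = l" using K_fix[OF assms e_dvd_n] .
  show ?thesis unfolding L_def power_mult_distrib s1 s2 s3
    by (simp add: algebra_simps sum_distrib_left)
qed

lemma radical_eq:
  assumes "(a::nat \<Rightarrow> 'f) \<in> avecs n k"
  shows "radical (Bform m n d e k a) = {x. L a x = 0}"
proof -
  have "(\<forall>y. trace2 m e (y * L a x) = 0) \<longleftrightarrow> L a x = 0" for x
    using trace2_nondeg[OF card e_pos e_dvd_m m_pos, of "L a x"] by auto
  then show ?thesis unfolding radical_def Bform_eq[OF assms] by auto
qed

lemma ker_subspace: "is_subspace K {x. L a x = 0}"
  unfolding is_subspace_def using L_add L_scal
  by (auto simp: L_def power_0_left)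

lemma rad_card:
  assumes "(a::nat \<Rightarrow> 'f) \<in> avecs n k"
  shows "card (radical (Bform m n d e k a)) = 2 ^ (m - e * rankB m n d e k a)"
    and "e * rankB m n d e k a \<le> m"
proof -
  define D where "D = sub_dim K (radical (Bform m n d e k a))"
  have "card (radical (Bform m n d e k a)) = card K ^ D"
    unfolding D_def radical_eq[OF assms] by (rule subspace_card[OF K_subfield ker_subspace])
  also have "\<dots> = 2 ^ (e * D)" using subfield2_card[OF card m_pos e_pos e_dvd_m]
    by (simp add: power_mult)
  finally have c: "card (radical (Bform m n d e k a)) = 2 ^ (e * D)" .
  have "card (radical (Bform m n d e k a)) \<le> card (UNIV :: 'f set)" by (rule card_mono) auto
  then have "(2::nat) ^ (e * D) \<le> 2 ^ m" using c card by simp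
  then have eD: "e * D \<le> m" by simp
  have r: "rankB m n d e k a = m div e - D" unfolding rankB_def D_def ..
  have me: "m = e * (m div e)" using e_dvd_m by simp
  have "e * rankB m n d e k a = e * (m div e) - e * D" unfolding r by (simp add: diff_mult_distrib2)
  then have er: "e * rankB m n d e k a = m - e * D" using me by simp
  then show "card (radical (Bform m n d e k a)) = 2 ^ (m - e * rankB m n d e k a)"
    using c eD by simp
  show "e * rankB m n d e k a \<le> m" using er by simp
qed

lemma Q_fixed:
  assumes "(a::nat \<Rightarrow> 'f) \<in> avecs n k"
  shows "(Qform m n d e k a x) ^ (2 ^ e) = Qform m n d e k a x"
proof -
  have a0: "a 0 ^ (2 ^ n) = a 0" using assms by (simp add: avecs_def subfield2_def)
  have w0: "(a 0 * x ^ (2 ^ (n * d div e) + 1)) ^ (2 ^ n) = a 0 * x ^ (2 ^ (n * d div e) + 1)"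
  proof -
    have "(x ^ (2 ^ n)) ^ (2 ^ n) = x" using FR m2n by (simp add: pow_pow2 mult_2)
    then show ?thesis unfolding pow_N0 power_add using a0
      by (simp add: power_mult_distrib mult_ac)
  qed
  show ?thesis unfolding Qform_def c2_frob_add[OF c2] c2_frob_sum[OF c2]
    using trace2_fixed[OF c2 e_pos e_dvd_n w0] trace2_fixed[OF c2 e_pos e_dvd_m FR] by simp
qed

definition F :: "(nat \<Rightarrow> 'f) \<Rightarrow> 'f \<Rightarrow> 'f" where "F a x = trace2 e 1 (Qform m n d e k a x)"

lemma F01: "(a::nat \<Rightarrow> 'f) \<in> avecs n k \<Longrightarrow> F a x = 0 \<or> F a x = 1"
  unfolding F_def by (rule trace2_01[OF c2 Q_fixed])

lemma Q0: "Qform m n d e k a 0 = 0"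
  unfolding Qform_def by (simp add: power_0_left)

lemma F0: "F a 0 = 0" unfolding F_def Q0 by simp

lemma F_H: "(a::nat \<Rightarrow> 'f) \<in> avecs n k \<Longrightarrow> F a (x + y) + F a x + F a y = trace2 m 1 (y * L a x)"
proof -
  assume a: "(a::nat \<Rightarrow> 'f) \<in> avecs n k"
  have "F a (x + y) + F a x + F a y = trace2 e 1 (Bform m n d e k a x y)"
    unfolding F_def Bform_def c2_minus[OF c2] trace2_add[OF c2] ..
  also have "\<dots> = trace2 m 1 (y * L a x)"
    unfolding Bform_eq[OF a] by (rule trace2_comp[OF c2 e_pos e_dvd_m])
  finally show ?thesis .
qed

lemma Q_split:
  assumes "(a::nat \<Rightarrow> 'f) \<in> avecs n k"
  shows "Qform m n d e k a x = Qform m n d e k (a(k := 0)) x + trace2 m e (a k * x)"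
proof -
  have "(\<Sum>j\<in>{1..<k}. trace2 m e ((a(k := 0)) j * x ^ (2 ^ ((n div e - j) * d) + 1)))
      = (\<Sum>j\<in>{1..<k}. trace2 m e (a j * x ^ (2 ^ ((n div e - j) * d) + 1)))"
    by (intro sum.cong) auto
  then show ?thesis unfolding Qform_def using k_pos by simp
qed

lemma F_split:
  assumes "(a::nat \<Rightarrow> 'f) \<in> avecs n k"
  shows "F a x = F (a(k := 0)) x + trace2 m 1 (a k * x)"
  unfolding F_def Q_split[OF assms] trace2_add[OF c2] trace2_comp[OF c2 e_pos e_dvd_m] ..

lemma Q_add: "Qform m n d e k (\<lambda>j. (a::nat \<Rightarrow> 'f) j + b j) x = Qform m n d e k a x + Qform m n d e k b x"
  unfolding Qform_def by (simp add: distrib_right trace2_add[OF c2] sum.distrib add_ac)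

lemma tr01: "trace2 m 1 (x::'f) = 0 \<or> trace2 m 1 x = 1"
  using trace2_01[OF c2, of x m] FR[of x] by blast

lemma trnd: "(z::'f) \<noteq> 0 \<Longrightarrow> \<exists>y. trace2 m 1 (y * z) \<noteq> 0"
  by (rule trace2_nondeg[OF card _ _ m_pos]) auto

lemma walsh_q: "(a::nat \<Rightarrow> 'f) \<in> avecs n k \<Longrightarrow> walsh (F a) (trace2 m 1)"
proof (unfold_locales)
  assume a: "(a::nat \<Rightarrow> 'f) \<in> avecs n k"
  show "(2::'f) = 0" by (rule c2)
  show "F a x = 0 \<or> F a x = 1" for x by (rule F01[OF a])
  show "F a 0 = 0" by (rule F0)
  show "F a (x + x' + y) + F a (x + x') + F a y = F a (x + y) + F a x + F a y + (F a (x' + y) + F a x' + F a y)" for x x' y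
    unfolding F_H[OF a] L_add distrib_left trace2_add[OF c2] ..
  show "trace2 m 1 x = 0 \<or> trace2 m 1 x = 1" for x :: 'f by (rule tr01)
  show "trace2 m 1 (x + y) = trace2 m 1 x + trace2 m 1 y" for x y :: 'f by (rule trace2_add[OF c2])
  show "z \<noteq> 0 \<Longrightarrow> \<exists>y. trace2 m 1 (y * z) \<noteq> 0" for z :: 'f by (rule trnd)
qed

lemma walsh_R:
  assumes "(a::nat \<Rightarrow> 'f) \<in> avecs n k"
  shows "walsh.R (F a) = radical (Bform m n d e k a)"
proof -
  interpret w: walsh "F a" "trace2 m 1" by (rule walsh_q[OF assms])
  have "(\<forall>y. trace2 m 1 (y * L a x) = 0) \<longleftrightarrow> L a x = 0" for x
    using trnd[of "L a x"] by auto
  then show ?thesis unfolding w.R_def w.H_def F_H[OF assms] radical_eq[OF assms] by auto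
qed

end




context ctx begin

definition gI :: "nat \<times> nat \<Rightarrow> nat" where
  "gI = (\<lambda>(j, t). if j = 0 then n else if t = 0 then sig j else m - sig j)"
definition cI :: "(nat \<Rightarrow> 'f) \<Rightarrow> nat \<times> nat \<Rightarrow> 'f" where
  "cI q = (\<lambda>(j, t). if j = 0 then q 0 else if t = 0 then q j else q j ^ (2 ^ (m - sig j)))"
definition II :: "(nat \<times> nat) set" where "II = insert (0, 0) ({1..<k} \<times> {0, 1})"

lemma L_lin: "L q x = (\<Sum>i\<in>II. cI q i * x ^ (2 ^ gI i))"
proof -
  have "(\<Sum>i\<in>II. cI q i * x ^ (2 ^ gI i)) = q 0 * x ^ (2 ^ n) + (\<Sum>i\<in>{1..<k} \<times> {0, 1}. cI q i * x ^ (2 ^ gI i))"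
    unfolding II_def by (subst sum.insert) (auto simp: cI_def gI_def)
  also have "(\<Sum>i\<in>{1..<k} \<times> {0, 1}. cI q i * x ^ (2 ^ gI i))
      = (\<Sum>j\<in>{1..<k}. \<Sum>t\<in>{0::nat, 1}. cI q (j, t) * x ^ (2 ^ gI (j, t)))"
    by (subst sum.cartesian_product) (simp add: split_def)
  also have "\<dots> = (\<Sum>j\<in>{1..<k}. q j * x ^ (2 ^ sig j) + q j ^ (2 ^ (m - sig j)) * x ^ (2 ^ (m - sig j)))"
    by (intro sum.cong refl) (auto simp: cI_def gI_def)
  finally show ?thesis unfolding L_def by simp
qed

lemma II_cases:
  assumes "i \<in> II"
  obtains "i = (0, 0)" | j where "j \<in> {1..<k}" "i = (j, 0)" | j where "j \<in> {1..<k}" "i = (j, 1)"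
  using assms unfolding II_def by auto

lemma gI_inj: "inj_on gI II"
proof (rule inj_onI)
  fix i i' assume i: "i \<in> II" "i' \<in> II" "gI i = gI i'"
  have key: "sig j < m \<and> sig j' < m \<and> sig j \<noteq> n \<and> sig j' \<noteq> n \<and> sig j + sig j' \<noteq> m
      \<and> (sig j = sig j' \<longrightarrow> j = j')" if "j \<in> {1..<k}" "j' \<in> {1..<k}" for j j'
    using sig_lt sig_ne_n[OF that(1)] sig_ne_n[OF that(2)] sig_sum[OF that] sig_inj[OF that] by blast
  have key0: "sig j < m \<and> sig j \<noteq> n \<and> m - sig j \<noteq> n" if "j \<in> {1..<k}" for j
  proof -
    have "sig j < m" "sig j \<noteq> n" using sig_lt sig_ne_n[OF that] by blast+
    then show ?thesis using m2n by linarith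
  qed
  show "i = i'"
  proof (cases rule: II_cases[OF i(1)])
    case 1
    then show ?thesis
    proof (cases rule: II_cases[OF i(2)])
      case 1 then show ?thesis using \<open>i = (0,0)\<close> by simp
    next
      case (2 j') then show ?thesis using \<open>i = (0,0)\<close> i(3) key0[OF 2(1)] by (simp add: gI_def)
    next
      case (3 j') then show ?thesis using \<open>i = (0,0)\<close> i(3) key0[OF 3(1)] by (auto simp: gI_def)
    qed
  next
    case (2 j)
    note jj = 2
    then show ?thesis
    proof (cases rule: II_cases[OF i(2)])
      case 1 then show ?thesis using 2 i(3) key0[OF 2(1)] by (simp add: gI_def)
    next
      case (2 j') then show ?thesis using \<open>i = (j, 0)\<close> jj i(3) key[OF \<open>j \<in> _\<close> 2(1)] by (simp add: gI_def)
    next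
      case (3 j') then show ?thesis using \<open>i = (j, 0)\<close> jj i(3) key[OF \<open>j \<in> _\<close> 3(1)] by (auto simp: gI_def)
    qed
  next
    case (3 j)
    note jj = 3
    then show ?thesis
    proof (cases rule: II_cases[OF i(2)])
      case 1 then show ?thesis using 3 i(3) key0[OF 3(1)] by (auto simp: gI_def)
    next
      case (2 j') then show ?thesis using \<open>i = (j, 1)\<close> jj i(3) key[OF 2(1) \<open>j \<in> _\<close>] by (auto simp: gI_def)
    next
      case (3 j') then show ?thesis using \<open>i = (j, 1)\<close> jj i(3) key[OF \<open>j \<in> _\<close> 3(1)] by (auto simp: gI_def)
    qed
  qed
qed

lemma gI_lt: "i \<in> II \<Longrightarrow> gI i < m"
  using sig_pos sig_lt m2n n_pos unfolding II_def gI_def by (auto split: if_splits)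

lemma II0: "(0, 0) \<in> II" unfolding II_def by simp
lemma IIj: "j \<in> {1..<k} \<Longrightarrow> (j, 0) \<in> II" unfolding II_def by simp

lemma L_zero:
  assumes "\<And>x. L q x = 0"
  shows "q 0 = 0" "j \<in> {1..<k} \<Longrightarrow> q j = 0"
proof -
  have z: "(\<Sum>i\<in>II. cI q i * x ^ (2 ^ gI i)) = 0" for x using assms L_lin by simp
  have fin: "finite II" unfolding II_def by simp
  have "cI q (0, 0) = 0"
    by (rule lin_poly_zero[OF card fin gI_inj _ z]) (simp_all add: gI_lt II0)
  then show "q 0 = 0" by (simp add: cI_def)
  assume j: "j \<in> {1..<k}"
  have "cI q (j, 0) = 0"
    by (rule lin_poly_zero[OF card fin gI_inj _ z]) (simp_all add: gI_lt IIj[OF j])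
  then show "q j = 0" using j by (simp add: cI_def)
qed

lemma inj_core:
  assumes a: "(a::nat \<Rightarrow> 'f) \<in> avecs n k" and z: "\<And>x. F a x = 0"
  shows "a = (\<lambda>_. 0)"
proof -
  define q where "q = a(k := 0)"
  have q: "q \<in> avecs n k" using a k_pos unfolding q_def avecs_def by auto
  have Fq: "F q x = trace2 m 1 (a k * x)" for x
  proof -
    have "F q x + trace2 m 1 (a k * x) = 0" using z[of x] F_split[OF a, of x] unfolding q_def by simp
    then have "trace2 m 1 (a k * x) = - F q x" by (simp add: add_eq_0_iff)
    then show ?thesis using c2_neg[OF c2] by simp
  qed
  have "trace2 m 1 (y * L q x) = 0" for x y
  proof -
    have "trace2 m 1 (y * L q x) = F q (x + y) + F q x + F q y" using F_H[OF q] by simp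
    also have "\<dots> = 0"
    proof -
      have "\<And>A B. (A::'f) + B + A + B = (A + A) + (B + B)" by (simp add: add_ac)
      then show ?thesis unfolding Fq distrib_left trace2_add[OF c2] by (simp add: c2_double[OF c2])
    qed
    finally show ?thesis .
  qed
  then have Lz: "L q x = 0" for x using trnd[of "L q x"] by auto
  have qz: "q = (\<lambda>_. 0)"
  proof
    fix j
    show "q j = 0"
    proof (cases "j = 0")
      case True then show ?thesis using L_zero(1)[OF Lz] by simp
    next
      case False
      show ?thesis
      proof (cases "j < k")
        case True then show ?thesis using L_zero(2)[OF Lz] False by simp
      next
        case False then show ?thesis using q unfolding q_def avecs_def by auto
      qed
    qed
  qed
  have "F q x = 0" for x unfolding qz F_def Qform_def by (simp add: trace2_def power_0_left)
  then have "trace2 m 1 (x * a k) = 0" for x using Fq by (simp add: mult.commute)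
  then have ak: "a k = 0" using trnd[of "a k"] by auto
  show ?thesis
  proof
    fix j
    show "a j = 0"
    proof (cases "j = k")
      case True then show ?thesis using ak by simp
    next
      case False then show ?thesis using fun_cong[OF qz, of j] unfolding q_def by simp
    qed
  qed
qed

lemma pow_bij:
  assumes "primitive_elem p"
  shows "bij_betw (\<lambda>i. inverse p ^ i) {..<2 ^ m - 1} (UNIV - {0})"
proof -
  define P where "P = inverse p"
  have p0: "p \<noteq> 0" using assms by (simp add: primitive_elem_def)
  then have P0: "P \<noteq> 0" by (simp add: P_def)
  have "(1::nat) < 2 ^ m" using m_pos one_less_power[of "2::nat" m] by simp
  then have m1: "(2::nat) ^ m - 1 > 0" by simp
  have ord: "y ^ (2 ^ m - 1) = 1" if "y \<noteq> 0" for y :: 'f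
  proof -
    have "y * y ^ (2 ^ m - 1) = y ^ (2 ^ m)" using m1 by (simp flip: power_Suc)
    also have "\<dots> = y * 1" using FR by simp
    finally show ?thesis using that by simp
  qed
  have img: "(\<lambda>i. P ^ i) ` {..<2 ^ m - 1} = UNIV - {0}"
  proof
    show "(\<lambda>i. P ^ i) ` {..<2 ^ m - 1} \<subseteq> UNIV - {0}" using P0 by auto
    show "UNIV - {0} \<subseteq> (\<lambda>i. P ^ i) ` {..<2 ^ m - 1}"
    proof
      fix x :: 'f assume "x \<in> UNIV - {0}"
      then have x0: "x \<noteq> 0" by simp
      then obtain i where "inverse x = p ^ i" using assms unfolding primitive_elem_def
        by (metis inverse_zero_imp_zero)
      then have xi: "x = P ^ i" unfolding P_def by (metis inverse_inverse_eq power_inverse)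
      define r where "r = i mod (2 ^ m - 1)"
      have "P ^ i = (P ^ (2 ^ m - 1)) ^ (i div (2 ^ m - 1)) * P ^ r"
        unfolding r_def by (simp add: power_mult[symmetric] power_add[symmetric])
      also have "\<dots> = P ^ r" using ord[OF P0] by simp
      finally have "x = P ^ r" using xi by simp
      moreover have "r < 2 ^ m - 1" unfolding r_def using m1 by simp
      ultimately show "x \<in> (\<lambda>i. P ^ i) ` {..<2 ^ m - 1}" by blast
    qed
  qed
  have "card (UNIV - {0 :: 'f}) = 2 ^ m - 1" using card by (simp add: card_Diff_singleton)
  then have "card ((\<lambda>i. P ^ i) ` {..<2 ^ m - 1}) = card {..<(2::nat) ^ m - 1}" using img by simp
  then have "inj_on (\<lambda>i. P ^ i) {..<2 ^ m - 1}" by (intro eq_card_imp_inj_on) simp_all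
  then show ?thesis using img unfolding bij_betw_def P_def by simp
qed

lemma DC_W:
  assumes pe: "primitive_elem p" and a: "(a::nat \<Rightarrow> 'f) \<in> avecs n k"
  shows "real_of_int (DC m (codeword m n d e k p a)) = (\<Sum>x\<in>UNIV. sg (F a x)) - 1"
proof -
  have "real_of_int (DC m (codeword m n d e k p a)) = (\<Sum>i<2 ^ m - 1. sg (F a (inverse p ^ i)))"
    unfolding DC_def of_int_sum by (intro sum.cong refl) (simp add: codeword_def F_def sg_def)
  also have "\<dots> = (\<Sum>x\<in>UNIV - {0}. sg (F a x))"
    by (rule sum.reindex_bij_betw[OF pow_bij[OF pe]])
  also have "\<dots> = (\<Sum>x\<in>UNIV. sg (F a x)) - sg (F a 0)"
    by (simp add: sum_diff1)
  finally show ?thesis by (simp add: F0 sg_def)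
qed

lemma codeword_inj:
  assumes pe: "primitive_elem p"
  shows "inj_on (codeword m n d e k p) (avecs n k :: (nat \<Rightarrow> 'f) set)"
proof (rule inj_onI)
  fix a b :: "nat \<Rightarrow> 'f"
  assume a: "a \<in> avecs n k" and b: "b \<in> avecs n k" and eq: "codeword m n d e k p a = codeword m n d e k p b"
  have Fab: "F a x = F b x" for x
  proof (cases "x = 0")
    case True then show ?thesis by (simp add: F0)
  next
    case False
    then have "x \<in> (\<lambda>i. inverse p ^ i) ` {..<2 ^ m - 1}" using pow_bij[OF pe] by (auto simp: bij_betw_def)
    then obtain i where i: "i < 2 ^ m - 1" "x = inverse p ^ i" by auto
    show ?thesis using fun_cong[OF eq, of i] i by (simp add: codeword_def F_def)
  qed
  define s where "s j = a j + b j" for j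
  have s: "s \<in> avecs n k" using a b unfolding s_def avecs_def subfield2_def by (auto simp: c2_frob_add[OF c2])
  have "F s x = 0" for x
    unfolding F_def s_def Q_add trace2_add[OF c2] using Fab[of x] by (simp add: F_def c2_double[OF c2])
  then have "s = (\<lambda>_. 0)" by (rule inj_core[OF s])
  then have "a j + b j = 0" for j unfolding s_def by metis
  then show "a = b" using c2_neg[OF c2] by (metis add_eq_0_iff ext)
qed

end




context ctx begin

lemma avecs_finite: "finite (avecs n k :: (nat \<Rightarrow> 'f) set)"
proof -
  have "avecs n k \<subseteq> (\<lambda>g j. if j \<le> k then g j else 0) ` (PiE {..k} (\<lambda>_. UNIV :: 'f set))"
  proof
    fix a :: "nat \<Rightarrow> 'f" assume a: "a \<in> avecs n k"
    have "a = (\<lambda>j. if j \<le> k then restrict a {..k} j else 0)"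
      using a by (auto simp: avecs_def)
    moreover have "restrict a {..k} \<in> PiE {..k} (\<lambda>_. UNIV)" by simp
    ultimately show "a \<in> (\<lambda>g j. if j \<le> k then g j else 0) ` (PiE {..k} (\<lambda>_. UNIV :: 'f set))" by blast
  qed
  moreover have "finite (PiE {..k} (\<lambda>_. UNIV :: 'f set))" by (simp add: finite_PiE)
  ultimately show ?thesis by (meson finite_imageI finite_subset)
qed

lemma F_zero: "F (\<lambda>_. 0) x = 0"
  unfolding F_def Qform_def by (simp add: trace2_def power_0_left)

lemma codeword_zero: "codeword m n d e k p (\<lambda>_. 0 :: 'f) = (\<lambda>_. 0)"
proof (rule ext)
  fix i
  show "codeword m n d e k p (\<lambda>_. 0 :: 'f) i = 0"
    unfolding codeword_def using F_zero[of "inverse p ^ i"] unfolding F_def by simp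
qed

lemma zero_avecs: "(\<lambda>_. 0 :: 'f) \<in> avecs n k"
  by (simp add: avecs_def subfield2_def power_0_left)

lemma upd_avecs: "(q::nat \<Rightarrow> 'f) \<in> avecs n k \<Longrightarrow> q(k := b) \<in> avecs n k"
  using k_pos by (auto simp: avecs_def)

lemma L_upd: "L (q(k := b)) = L q"
  unfolding L_def using k_pos by (intro ext) (simp)

lemma rankB_upd:
  assumes "(q::nat \<Rightarrow> 'f) \<in> avecs n k"
  shows "rankB m n d e k (q(k := b)) = rankB m n d e k q"
proof -
  have "Bform m n d e k (q(k := b)) = Bform m n d e k q"
    by (intro ext) (simp add: Bform_eq[OF upd_avecs[OF assms]] Bform_eq[OF assms] L_upd)
  then show ?thesis unfolding rankB_def by simp
qed

lemma count_q:
  assumes pe: "primitive_elem p" and r: "r \<le> m div e" "even r" and eps: "eps \<in> {1, -1::int}"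
    and q: "(q::nat \<Rightarrow> 'f) \<in> avecs n k" "q k = 0"
  shows "real (card {b. codeword m n d e k p (q(k := b)) \<noteq> (\<lambda>_. 0)
             \<and> DC m (codeword m n d e k p (q(k := b))) = -1 + eps * 2 ^ (m - e * r div 2)})
       = (if rankB m n d e k q = r \<and> (\<exists>j<k. q j \<noteq> 0)
          then (2 ^ (e * r) + of_int eps * 2 ^ (e * r div 2)) / 2 else 0)"
proof -
  interpret w: walsh "F q" "trace2 m 1" by (rule walsh_q[OF q(1)])
  define sr :: real where "sr = 2 ^ (m - e * r div 2)"
  have sr_pos: "sr > 0" unfolding sr_def by simp
  have qq: "(q(k := b))(k := 0) = q" for b using q(2) by auto
  have Fb: "F (q(k := b)) x = F q x + trace2 m 1 (b * x)" for b x
    using F_split[OF upd_avecs[OF q(1)], where x=x] unfolding qq by simp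
  have DCb: "real_of_int (DC m (codeword m n d e k p (q(k := b)))) = w.W b - 1" for b
    unfolding DC_W[OF pe upd_avecs[OF q(1)]] w.W_def Fb ..
  have eqv: "DC m (codeword m n d e k p (q(k := b))) = -1 + eps * 2 ^ (m - e * r div 2)
      \<longleftrightarrow> w.W b = of_int eps * sr" for b
  proof -
    have "DC m (codeword m n d e k p (q(k := b))) = -1 + eps * 2 ^ (m - e * r div 2)
        \<longleftrightarrow> real_of_int (DC m (codeword m n d e k p (q(k := b)))) = real_of_int (-1 + eps * 2 ^ (m - e * r div 2))"
      by (simp only: of_int_eq_iff)
    also have "\<dots> \<longleftrightarrow> w.W b = of_int eps * sr" unfolding DCb sr_def by simp
    finally show ?thesis .
  qed
  have eps': "of_int eps = (1::real) \<or> of_int eps = (-1::real)" using eps by auto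
  have erm: "e * r \<le> m"
  proof -
    have "e * r \<le> e * (m div e)" using r(1) by simp
    also have "\<dots> = m" using e_dvd_m by simp
    finally show ?thesis .
  qed
  show ?thesis
  proof (cases "\<exists>j<k. q j \<noteq> 0")
    case True
    then obtain j where j: "j < k" "q j \<noteq> 0" by blast
    have nz: "codeword m n d e k p (q(k := b)) \<noteq> (\<lambda>_. 0)" for b
    proof
      assume "codeword m n d e k p (q(k := b)) = (\<lambda>_. 0)"
      then have "codeword m n d e k p (q(k := b)) = codeword m n d e k p (\<lambda>_. 0)" by (simp add: codeword_zero)
      then have "q(k := b) = (\<lambda>_. 0)"
        using inj_onD[OF codeword_inj[OF pe] _ upd_avecs[OF q(1)] zero_avecs] by blast
      then have "(q(k := b)) j = 0" by simp
      then show False using j by simp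
    qed
    have set: "{b. codeword m n d e k p (q(k := b)) \<noteq> (\<lambda>_. 0)
             \<and> DC m (codeword m n d e k p (q(k := b))) = -1 + eps * 2 ^ (m - e * r div 2)}
        = {b. w.W b = of_int eps * sr}" using nz eqv by auto
    have cR: "real (card w.R) = 2 ^ (m - e * rankB m n d e k q)"
      using rad_card(1)[OF q(1)] walsh_R[OF q(1)] by simp
    have erk: "e * rankB m n d e k q \<le> m" by (rule rad_card(2)[OF q(1)])
    have ss: "sr * sr = 2 ^ (m + m - e * r)"
    proof -
      have "e * r div 2 * 2 = e * r" using r(2) by simp
      then have "(m - e * r div 2) + (m - e * r div 2) = m + m - e * r" using erm by linarith
      then show ?thesis unfolding sr_def by (simp flip: power_add)
    qed
    have NR: "real (card (UNIV :: 'f set)) * real (card w.R) = 2 ^ (m + m - e * rankB m n d e k q)"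
      using card cR erk by (simp flip: power_add)
    have iff: "sr * sr = real (card (UNIV :: 'f set)) * real (card w.R) \<longleftrightarrow> rankB m n d e k q = r"
    proof -
      have "sr * sr = real (card (UNIV :: 'f set)) * real (card w.R) \<longleftrightarrow> m + m - e * r = m + m - e * rankB m n d e k q"
        unfolding ss NR by (rule power_inject_exp) simp
      also have "\<dots> \<longleftrightarrow> e * r = e * rankB m n d e k q" using erm erk by linarith
      also have "\<dots> \<longleftrightarrow> rankB m n d e k q = r" using e_pos by auto
      finally show ?thesis .
    qed
    have h1: "real (card (UNIV :: 'f set)) * real (card (UNIV :: 'f set)) / (sr * sr) = 2 ^ (e * r)"
    proof -
      have "(2::real) ^ (m + m) = 2 ^ (m + m - e * r) * 2 ^ (e * r)" using erm by (simp flip: power_add)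
      then show ?thesis using card unfolding ss by (simp add: power_add[symmetric] field_simps)
    qed
    have h2: "real (card (UNIV :: 'f set)) / sr = 2 ^ (e * r div 2)"
    proof -
      have "(2::real) ^ m = 2 ^ (m - e * r div 2) * 2 ^ (e * r div 2)" using erm by (simp flip: power_add)
      then show ?thesis using card unfolding sr_def by (simp add: field_simps)
    qed
    have h3: "real_of_int eps * real (card (UNIV :: 'f set)) / sr = real_of_int eps * 2 ^ (e * r div 2)"
      using h2 by (metis times_divide_eq_right)
    have T: "(\<exists>j<k. q j \<noteq> 0) = True" using True by simp
    show ?thesis unfolding set w.W_count[OF sr_pos eps'] iff h1 h3 T by (simp only: simp_thms)
  next
    case False
    then have q0: "q = (\<lambda>_. 0)" using q unfolding avecs_def by (auto intro!: ext) (metis linorder_neqE_nat)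
    have E: "{b. codeword m n d e k p (q(k := b)) \<noteq> (\<lambda>_. 0)
             \<and> DC m (codeword m n d e k p (q(k := b))) = -1 + eps * 2 ^ (m - e * r div 2)} = {}"
    proof (rule ccontr)
      assume "\<not> ?thesis"
      then obtain b where b: "codeword m n d e k p (q(k := b)) \<noteq> (\<lambda>_. 0)"
        "w.W b = of_int eps * sr" using eqv by auto
      have Fq: "F q x = 0" for x unfolding q0 F_def Qform_def by (simp add: trace2_def power_0_left)
      have "w.W b = (\<Sum>x\<in>UNIV. sg (trace2 m 1 (x * b)))" unfolding w.W_def Fq by (simp add: mult.commute)
      also have "\<dots> = (if b = 0 then real (card (UNIV :: 'f set)) else 0)" by (rule w.tr_sum)
      finally have "b = 0" using b(2) sr_pos eps' by (auto split: if_splits)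
      then have "q(k := b) = (\<lambda>_. 0)" using q0 by auto
      then show False using b(1) codeword_zero by simp
    qed
    show ?thesis unfolding E using False by auto
  qed
qed

end




context ctx begin

lemma upd_inj:
  assumes "\<And>q. q \<in> A \<Longrightarrow> q k = 0"
  shows "inj_on (\<lambda>(q, b). (q::nat \<Rightarrow> 'f)(k := b)) (SIGMA q:A. X q)"
proof (rule inj_onI)
  fix x y assume x: "x \<in> (SIGMA q:A. X q)" and y: "y \<in> (SIGMA q:A. X q)"
    and eq: "(case x of (q, b) \<Rightarrow> q(k := b)) = (case y of (q, b) \<Rightarrow> q(k := b))"
  obtain q b where xq: "x = (q, b)" "q \<in> A" using x by auto
  obtain q' b' where yq: "y = (q', b')" "q' \<in> A" using y by auto
  have e1: "q(k := b) = q'(k := b')" using eq xq yq by simp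
  have "b = b'" using fun_cong[OF e1, of k] by simp
  moreover have "q = q'"
  proof
    fix j show "q j = q' j"
      using fun_cong[OF e1, of j] assms[OF xq(2)] assms[OF yq(2)] by (cases "j = k") auto
  qed
  ultimately show "x = y" using xq yq by simp
qed

theorem main:
  assumes pe: "primitive_elem p" and r: "even r" "r \<le> m div e" and eps: "eps \<in> {1, -1::int}"
  shows "real (card {c \<in> code m n d e k p. c \<noteq> (\<lambda>_. 0) \<and>
                DC m c = -1 + eps * 2 ^ (m - e * r div 2)})
       = (1/2::real) * (2 ^ (e * r) + of_int eps * 2 ^ (e * r div 2))
         * (real (card {a \<in> (avecs n k :: (nat \<Rightarrow> 'f) set). rankB m n d e k a = r \<and> (\<exists>j<k. a j \<noteq> 0)}) / 2 ^ m)"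
proof -
  define V where "V = (avecs n k :: (nat \<Rightarrow> 'f) set)"
  define t :: int where "t = -1 + eps * 2 ^ (m - e * r div 2)"
  define cr :: real where "cr = (2 ^ (e * r) + of_int eps * 2 ^ (e * r div 2)) / 2"
  define Q0 where "Q0 = {q \<in> V. q k = 0}"
  define Qs where "Qs = {q \<in> Q0. rankB m n d e k q = r \<and> (\<exists>j<k. q j \<noteq> 0)}"
  define At where "At = {a \<in> V. codeword m n d e k p a \<noteq> (\<lambda>_. 0) \<and> DC m (codeword m n d e k p a) = t}"
  define Bq where "Bq q = {b. codeword m n d e k p (q(k := b)) \<noteq> (\<lambda>_. 0) \<and> DC m (codeword m n d e k p (q(k := b))) = t}" for q
  define \<Phi> :: "(nat \<Rightarrow> 'f) \<times> 'f \<Rightarrow> nat \<Rightarrow> 'f" where "\<Phi> = (\<lambda>(q, b). q(k := b))"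
  have finV: "finite V" unfolding V_def by (rule avecs_finite)
  have finQ0: "finite Q0" unfolding Q0_def using finV by simp
  have QsQ0: "Qs \<subseteq> Q0" unfolding Qs_def by auto
  have Q0k: "\<And>q. q \<in> Q0 \<Longrightarrow> q k = 0" unfolding Q0_def by simp
  have Qsk: "\<And>q. q \<in> Qs \<Longrightarrow> q k = 0" using Q0k QsQ0 by blast
  have qq: "(a(k := 0))(k := a k) = a" for a :: "nat \<Rightarrow> 'f" by simp
  have S1: "{c \<in> code m n d e k p. c \<noteq> (\<lambda>_. 0) \<and> DC m c = t} = codeword m n d e k p ` At"
    unfolding code_def At_def V_def by auto
  have c1: "card {c \<in> code m n d e k p. c \<noteq> (\<lambda>_. 0) \<and> DC m c = t} = card At"
    unfolding S1 by (rule card_image, rule inj_on_subset[OF codeword_inj[OF pe]]) (auto simp: At_def V_def)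
  have S2: "At = \<Phi> ` (SIGMA q:Q0. Bq q)"
  proof
    show "At \<subseteq> \<Phi> ` (SIGMA q:Q0. Bq q)"
    proof
      fix a assume a: "a \<in> At"
      then have aV: "a \<in> V" by (simp add: At_def)
      have "a(k := 0) \<in> Q0" using upd_avecs aV unfolding Q0_def V_def by simp
      moreover have "a k \<in> Bq (a(k := 0))" using a qq unfolding Bq_def At_def by simp
      ultimately have "(a(k := 0), a k) \<in> (SIGMA q:Q0. Bq q)" by simp
      moreover have "\<Phi> (a(k := 0), a k) = a" unfolding \<Phi>_def by simp
      ultimately show "a \<in> \<Phi> ` (SIGMA q:Q0. Bq q)" by (metis image_eqI)
    qed
    show "\<Phi> ` (SIGMA q:Q0. Bq q) \<subseteq> At"
      using upd_avecs unfolding \<Phi>_def At_def Bq_def Q0_def V_def by auto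
  qed
  have "card At = card (SIGMA q:Q0. Bq q)"
    unfolding S2 \<Phi>_def by (rule card_image, rule upd_inj[of Q0], rule Q0k)
  also have "\<dots> = (\<Sum>q\<in>Q0. card (Bq q))" using finQ0 by (simp add: card_SigmaI)
  finally have "real (card At) = (\<Sum>q\<in>Q0. real (card (Bq q)))" by simp
  also have "\<dots> = (\<Sum>q\<in>Q0. cr * of_bool (q \<in> Qs))"
  proof (rule sum.cong[OF refl])
    fix q assume q: "q \<in> Q0"
    have "real (card (Bq q)) = (if rankB m n d e k q = r \<and> (\<exists>j<k. q j \<noteq> 0)
          then (2 ^ (e * r) + of_int eps * 2 ^ (e * r div 2)) / 2 else 0)"
      unfolding Bq_def t_def
      by (rule count_q[OF pe r(2,1) eps]) (use q in \<open>auto simp: Q0_def V_def\<close>)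
    then show "real (card (Bq q)) = cr * of_bool (q \<in> Qs)"
      using q unfolding Qs_def cr_def by auto
  qed
  also have "\<dots> = cr * real (card Qs)"
    using finQ0 QsQ0 by (simp add: sum_distrib_left[symmetric] Int_absorb1)
  finally have L: "real (card At) = cr * real (card Qs)" .
  have S5: "{a \<in> V. rankB m n d e k a = r \<and> (\<exists>j<k. a j \<noteq> 0)} = \<Phi> ` (SIGMA q:Qs. UNIV)"
  proof
    show "{a \<in> V. rankB m n d e k a = r \<and> (\<exists>j<k. a j \<noteq> 0)} \<subseteq> \<Phi> ` (SIGMA q:Qs. UNIV)"
    proof
      fix a assume a: "a \<in> {a \<in> V. rankB m n d e k a = r \<and> (\<exists>j<k. a j \<noteq> 0)}"
      then have aV: "a \<in> V" by simp
      have q0: "a(k := 0) \<in> Q0" using upd_avecs aV unfolding Q0_def V_def by simp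
      have "rankB m n d e k (a(k := 0)) = rankB m n d e k a"
        using rankB_upd[of "a(k := 0)" "a k"] q0 unfolding Q0_def V_def by simp
      moreover have "\<exists>j<k. (a(k := 0)) j \<noteq> 0" using a by auto
      ultimately have "a(k := 0) \<in> Qs" using q0 a unfolding Qs_def by simp
      moreover have "\<Phi> (a(k := 0), a k) = a" unfolding \<Phi>_def by simp
      ultimately show "a \<in> \<Phi> ` (SIGMA q:Qs. UNIV)" by (metis SigmaI UNIV_I image_eqI)
    qed
    show "\<Phi> ` (SIGMA q:Qs. UNIV) \<subseteq> {a \<in> V. rankB m n d e k a = r \<and> (\<exists>j<k. a j \<noteq> 0)}"
    proof
      fix a assume "a \<in> \<Phi> ` (SIGMA q:Qs. UNIV)"
      then obtain q b where qb: "q \<in> Qs" "a = q(k := b)" unfolding \<Phi>_def by auto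
      have qV: "q \<in> V" using qb QsQ0 unfolding Q0_def by auto
      have "rankB m n d e k a = r" using qb rankB_upd[of q b] qV unfolding Qs_def V_def by simp
      moreover have "\<exists>j<k. a j \<noteq> 0" using qb unfolding Qs_def by auto
      moreover have "a \<in> V" using upd_avecs qV qb unfolding V_def by simp
      ultimately show "a \<in> {a \<in> V. rankB m n d e k a = r \<and> (\<exists>j<k. a j \<noteq> 0)}" by simp
    qed
  qed
  have "card {a \<in> V. rankB m n d e k a = r \<and> (\<exists>j<k. a j \<noteq> 0)} = card (SIGMA q:Qs. (UNIV :: 'f set))"
    unfolding S5 \<Phi>_def by (rule card_image, rule upd_inj[of Qs], rule Qsk)
  also have "\<dots> = card Qs * 2 ^ m" using card by (simp add: card_cartesian_product)
  finally have R: "real (card {a \<in> V. rankB m n d e k a = r \<and> (\<exists>j<k. a j \<noteq> 0)}) / 2 ^ m = real (card Qs)"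
    by simp
  show ?thesis
    using c1 L R unfolding t_def V_def cr_def by simp
qed

end

theorem theorem8p1:
  fixes m n d e k r :: nat and eps :: int and p :: "'f::{field,finite}"
  assumes "m > 0" "n > 0" "d > 0" "e > 0" "k > 0"
    and "m = 2 * n" and "e = gcd n d" and "e = gcd m d"
    and "1 \<le> k" and "k \<le> n div e"
    and "card (UNIV :: 'f set) = 2 ^ m"
    and "primitive_elem p"
    and "even r" and "r \<le> m div e"
    and "eps \<in> {1, -1}"
  shows "real (card {c \<in> code m n d e k p. c \<noteq> (\<lambda>_. 0) \<and>
                DC m c = -1 + eps * 2 ^ (m - e * r div 2)})
       = (1/2::real) * (2 ^ (e * r) + of_int eps * 2 ^ (e * r div 2))
         * (real (card {a \<in> (avecs n k :: (nat \<Rightarrow> 'f) set). rankB m n d e k a = r \<and> (\<exists>j<k. a j \<noteq> 0)}) / 2 ^ m)"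
proof -
  interpret ctx m n d e k p
    by unfold_locales (use assms in auto)
  show ?thesis by (rule main) (use assms in auto)
qed



end
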